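(* Let $0<\varepsilon<\frac12$, let $n\ge C\varepsilon^{-2.01}$ for a sufficiently large constant $C$, let $c>0$ be a sufficiently small constant, set $r=s=c\log(n)/\sqrt{\varepsilon}$ and $k=(n-1)/(r+1)$ (assumed an integer), and let $A=UDU^\top$ be drawn from the distribution described in the context. Let $g_1,\dots,g_s\sim\mathcal{N}(0,I_n)$ be i.i.d. and independent of $A$. For each $j\in[s]$ let $a_{j,1}=|\langle g_j,u_1\rangle|$, where $u_1$ is the top eigenvector of $A$; for each $2\le t\le r+2$ let $P_t$ be the orthogonal projection onto the $\lambda_t$-eigenspace $E_t$ of $A$ (of dimension $k$), let $a_{j,t}=\|P_tg_j\|_2$ and $v_{j,t}=P_tg_j/a_{j,t}$, and let $V^{(t)}\in\mathbb{R}^{n\times s}$ be the matrix whose $j$-th column is $v_{j,t}$. Assume $k\ge 100s$. Then with probability at least $0.9$ all of the following hold: (1) $a_{j,1}\le 5\sqrt{\log n}$ for all $j\in[s]$; (2) $0.5\sqrt{k}\le a_{j,t}\le 2\sqrt{k}$ for all $j\in[s]$ and all $2\le t\le r+2$; (3) for every $2\le t\le r+2$, all singular values of $V^{(t)}$ lie in $[\frac14,4]$.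
   Context: Hard distribution: $\lambda_1=1+2\varepsilon$ and $\lambda_t=\cos\left(\frac{t-2}{r}\pi\right)$ for $2\le t\le r+2$. $D$ is the $n\times n$ diagonal matrix with $D_{1,1}=\lambda_1$ and $D_{i,i}=\lambda_{1+\lceil (i-1)/k\rceil}$ for $2\le i\le n$, so each $\lambda_t$, $2\le t\le r+2$, appears exactly $k$ times. $U$ is a Haar-random (uniformly random) $n\times n$ orthogonal matrix and $A=UDU^\top$. *)

theory Defs
  imports "HOL-Probability.Probability"
begin

(* Matrices/vectors with size varying inside the statement: n x n matrices are
   functions (nat \<times> nat) \<Rightarrow> real, entries (i,j) with i,j < n, 0-based indices.
   Paper index i corresponds to index i-1 here. *)

type_synonym rmat = "nat \<times> nat \<Rightarrow> real"

definition lam :: "real \<Rightarrow> nat \<Rightarrow> nat \<Rightarrow> real" where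
  "lam \<epsilon> r t = (if t = 1 then 1 + 2 * \<epsilon> else cos (real (t - 2) / real r * pi))"

(* diagonal of D, 0-based: Ddiag 0 = lambda_1, Ddiag i = lambda_{1 + ceil(i/k)} for 1 \<le> i \<le> n-1
   (paper: D_{i+1,i+1} = lambda_{1+ceil(i/k)}) *)
definition Ddiag :: "real \<Rightarrow> nat \<Rightarrow> nat \<Rightarrow> nat \<Rightarrow> real" where
  "Ddiag \<epsilon> r k i = (if i = 0 then lam \<epsilon> r 1 else lam \<epsilon> r (1 + nat \<lceil>real i / real k\<rceil>))"

definition Amat :: "real \<Rightarrow> nat \<Rightarrow> nat \<Rightarrow> nat \<Rightarrow> rmat \<Rightarrow> rmat" where
  "Amat \<epsilon> r k n U = restrict (\<lambda>(i,j). \<Sum>l<n. U (i,l) * Ddiag \<epsilon> r k l * U (j,l)) ({..<n} \<times> {..<n})"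

definition mat_mult :: "nat \<Rightarrow> rmat \<Rightarrow> rmat \<Rightarrow> rmat" where
  "mat_mult n M N = restrict (\<lambda>(i,j). \<Sum>l<n. M (i,l) * N (l,j)) ({..<n} \<times> {..<n})"

definition orthogonal_mat :: "nat \<Rightarrow> rmat \<Rightarrow> bool" where
  "orthogonal_mat n U \<longleftrightarrow>
     (\<forall>i<n. \<forall>j<n. (\<Sum>l<n. U (l,i) * U (l,j)) = (if i = j then 1 else 0))"

definition mat_space :: "nat \<Rightarrow> rmat measure" where
  "mat_space n = PiM ({..<n} \<times> {..<n}) (\<lambda>_. lborel)"

(* Haar (uniform) probability measure on the orthogonal group O(n): a probability measure
   concentrated on orthogonal matrices and invariant under left multiplication by every
   orthogonal matrix (this characterizes it uniquely). *)
definition haar_orthogonal :: "nat \<Rightarrow> rmat measure \<Rightarrow> bool" where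
  "haar_orthogonal n \<mu> \<longleftrightarrow>
     sets \<mu> = sets (mat_space n) \<and> prob_space \<mu> \<and>
     (AE U in \<mu>. orthogonal_mat n U) \<and>
     (\<forall>Q. orthogonal_mat n Q \<longrightarrow> distr \<mu> (mat_space n) (\<lambda>U. mat_mult n Q U) = \<mu>)"

(* s i.i.d. N(0, I_n) vectors: G (j,l) is the l-th coordinate of g_{j+1} *)
definition gauss_meas :: "nat \<Rightarrow> nat \<Rightarrow> rmat measure" where
  "gauss_meas s n = PiM ({..<s} \<times> {..<n}) (\<lambda>_. density lborel std_normal_density)"

(* <g_j, u_i>, u_i the i-th column of U *)
definition gdotu :: "nat \<Rightarrow> rmat \<Rightarrow> rmat \<Rightarrow> nat \<Rightarrow> nat \<Rightarrow> real" where
  "gdotu n U G j i = (\<Sum>l<n. G (j,l) * U (l,i))"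

(* P_t g_j, the orthogonal projection of g_j onto the lambda_t-eigenspace of A = U D U^T,
   i.e. U 1[D = lambda_t] U^T g_j; coordinate m *)
definition Pg :: "real \<Rightarrow> nat \<Rightarrow> nat \<Rightarrow> nat \<Rightarrow> rmat \<Rightarrow> rmat \<Rightarrow> nat \<Rightarrow> nat \<Rightarrow> nat \<Rightarrow> real" where
  "Pg \<epsilon> r k n U G t j m =
     (\<Sum>i\<in>{i. i < n \<and> Ddiag \<epsilon> r k i = lam \<epsilon> r t}. gdotu n U G j i * U (m,i))"

definition acoef :: "real \<Rightarrow> nat \<Rightarrow> nat \<Rightarrow> nat \<Rightarrow> rmat \<Rightarrow> rmat \<Rightarrow> nat \<Rightarrow> nat \<Rightarrow> real" where
  "acoef \<epsilon> r k n U G t j = sqrt (\<Sum>m<n. (Pg \<epsilon> r k n U G t j m)\<^sup>2)"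

definition Vmat :: "real \<Rightarrow> nat \<Rightarrow> nat \<Rightarrow> nat \<Rightarrow> nat \<Rightarrow> rmat \<Rightarrow> rmat \<Rightarrow> nat \<Rightarrow> rmat" where
  "Vmat \<epsilon> r k n s U G t = restrict (\<lambda>(m,j). Pg \<epsilon> r k n U G t j m / acoef \<epsilon> r k n U G t j)
                                  ({..<n} \<times> {..<s})"

(* sigma is a singular value of the p x q matrix V (p \<ge> q): sigma \<ge> 0 and sigma^2 is an
   eigenvalue of V^T V *)
definition singular_value :: "nat \<Rightarrow> nat \<Rightarrow> rmat \<Rightarrow> real \<Rightarrow> bool" where
  "singular_value p q V \<sigma> \<longleftrightarrow> \<sigma> \<ge> 0 \<and>
     (\<exists>x::nat \<Rightarrow> real. (\<exists>j<q. x j \<noteq> 0) \<and>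
        (\<forall>j<q. (\<Sum>l<q. (\<Sum>i<p. V (i,j) * V (i,l)) * x l) = \<sigma>\<^sup>2 * x j))"

definition good_event :: "real \<Rightarrow> nat \<Rightarrow> nat \<Rightarrow> nat \<Rightarrow> nat \<Rightarrow> rmat \<Rightarrow> rmat \<Rightarrow> bool" where
  "good_event \<epsilon> n r s k U G \<longleftrightarrow>
     (\<forall>j<s. \<bar>gdotu n U G j 0\<bar> \<le> 5 * sqrt (ln (real n))) \<and>
     (\<forall>j<s. \<forall>t\<in>{2..r+2}. 0.5 * sqrt (real k) \<le> acoef \<epsilon> r k n U G t j \<and>
                          acoef \<epsilon> r k n U G t j \<le> 2 * sqrt (real k)) \<and>
     (\<forall>t\<in>{2..r+2}. \<forall>\<sigma>. singular_value n s (Vmat \<epsilon> r k n s U G t) \<sigma> \<longrightarrow> 1/4 \<le> \<sigma> \<and> \<sigma> \<le> 4)"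

end

theory Submission
  imports Defs "Jordan_Normal_Form.Determinant"
begin

definition NN :: "real measure" where "NN = density lborel std_normal_density"

lemma NN_prob: "prob_space NN" unfolding NN_def by (rule prob_space_normal_density) simp
lemma sets_NN [measurable_cong]: "sets NN = sets borel" unfolding NN_def by simp
lemma space_NN[simp]: "space NN = UNIV" unfolding NN_def by simp

lemma GMI_prob: "prob_space (PiM I (\<lambda>_. NN))" by (rule prob_space_PiM) (rule NN_prob)

lemma coord_distr:
  assumes "i \<in> I"
  shows "distributed (PiM I (\<lambda>_. NN)) lborel (\<lambda>G. G i) std_normal_density"
proof -
  interpret product_prob_space "\<lambda>_. NN" I
    using prob_space.emeasure_space_1[OF NN_prob]
      sigma_finite_measure.sigma_finite_countable[OF prob_space_imp_sigma_finite[OF NN_prob]]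
    by unfold_locales auto
  have "distr (PiM I (\<lambda>_. NN)) lborel (\<lambda>G. G i) = distr (PiM I (\<lambda>_. NN)) NN (\<lambda>G. G i)"
    by (rule distr_cong) (simp_all add: sets_NN)
  also have "\<dots> = NN" by (rule PiM_component[OF assms])
  finally show ?thesis unfolding distributed_def NN_def
    using assms by auto
qed

lemma coord_indep:
  assumes "I \<noteq> {}"
  shows "prob_space.indep_vars (PiM I (\<lambda>_. NN)) (\<lambda>_. borel) (\<lambda>i G. G i) I"
proof -
  interpret product_prob_space "\<lambda>_. NN" I
    using prob_space.emeasure_space_1[OF NN_prob]
      sigma_finite_measure.sigma_finite_countable[OF prob_space_imp_sigma_finite[OF NN_prob]]
    by unfold_locales auto
  have 1: "distr (PiM I (\<lambda>_. NN)) borel (\<lambda>G. G i) = NN" if "i \<in> I" for i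
  proof -
    have "distr (PiM I (\<lambda>_. NN)) borel (\<lambda>G. G i) = distr (PiM I (\<lambda>_. NN)) NN (\<lambda>G. G i)"
      by (rule distr_cong) (simp_all add: sets_NN)
    also have "\<dots> = NN" by (rule PiM_component[OF that])
    finally show ?thesis .
  qed
  have 2: "distr (PiM I (\<lambda>_. NN)) (PiM I (\<lambda>_. borel)) (\<lambda>x. \<lambda>i\<in>I. x i) =
      distr (PiM I (\<lambda>_. NN)) (PiM I (\<lambda>_. NN)) (\<lambda>x. x)"
    by (rule distr_cong) (auto simp: space_PiM sets_NN intro!: sets_PiM_cong)
  show ?thesis
    apply (subst indep_vars_iff_distr_eq_PiM'[OF assms])
     apply simp
    apply (subst 2)
    apply (simp add: 1 cong: PiM_cong)
    done
qed

lemma lin_normal: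
  assumes fin: "finite I" and pos: "(\<Sum>x\<in>I. (c x)^2) > 0"
  shows "distributed (PiM I (\<lambda>_. NN)) lborel (\<lambda>G. \<Sum>x\<in>I. c x * G x)
           (normal_density 0 (sqrt (\<Sum>x\<in>I. (c x)^2)))"
proof -
  interpret P: prob_space "PiM I (\<lambda>_. NN)" by (rule GMI_prob)
  define J where "J = {x\<in>I. c x \<noteq> 0}"
  have JI: "J \<subseteq> I" and fJ: "finite J" using fin by (auto simp: J_def)
  have eq2: "(\<Sum>x\<in>I. (c x)^2) = (\<Sum>x\<in>J. (c x)^2)"
    by (rule sum.mono_neutral_right[OF fin JI]) (auto simp: J_def)
  have Jne: "J \<noteq> {}" using pos eq2 by auto
  have Ine: "I \<noteq> {}" using JI Jne by auto
  have eq1: "(\<lambda>G. \<Sum>x\<in>I. c x * G x) = (\<lambda>G. \<Sum>x\<in>J. c x * G x)"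
    by (rule ext, rule sum.mono_neutral_right[OF fin JI]) (auto simp: J_def)
  have ind: "P.indep_vars (\<lambda>_. borel) (\<lambda>x G. c x * G x) J"
    using P.indep_vars_compose[OF P.indep_vars_subset[OF coord_indep[OF Ine] JI],
        of "\<lambda>x y. c x * y" "\<lambda>_. borel"]
    by (simp add: o_def)
  have dist: "distributed (PiM I (\<lambda>_. NN)) lborel (\<lambda>G. c x * G x) (normal_density 0 \<bar>c x\<bar>)"
    if "x \<in> J" for x
  proof -
    have "distributed (PiM I (\<lambda>_. NN)) lborel (\<lambda>G. G x) std_normal_density"
      by (rule coord_distr) (use that JI in auto)
    from P.normal_density_affine[OF this, of "c x" 0] that show ?thesis
      by (auto simp: J_def)
  qed
  have "distributed (PiM I (\<lambda>_. NN)) lborel (\<lambda>G. \<Sum>x\<in>J. c x * G x)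
         (normal_density (\<Sum>x\<in>J. 0) (sqrt (\<Sum>x\<in>J. \<bar>c x\<bar>^2)))"
    by (rule P.sum_indep_normal[OF fJ Jne ind _ dist]) (auto simp: J_def)
  then show ?thesis by (simp add: eq1 eq2)
qed

definition LL :: "'i set \<Rightarrow> ('i \<Rightarrow> real) \<Rightarrow> ('i \<Rightarrow> real) \<Rightarrow> real" where
  "LL I c G = (\<Sum>x\<in>I. c x * G x)"

definition ip :: "'i set \<Rightarrow> ('i \<Rightarrow> real) \<Rightarrow> ('i \<Rightarrow> real) \<Rightarrow> real" where
  "ip I a b = (\<Sum>x\<in>I. a x * b x)"

lemma LL_meas[measurable]: "finite I \<Longrightarrow> LL I c \<in> borel_measurable (PiM I (\<lambda>_. NN))"
  unfolding LL_def by measurable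

lemma LL_moments:
  assumes fin: "finite I"
  shows "integrable (PiM I (\<lambda>_. NN)) (\<lambda>G. (LL I c G)^m)"
    and "integral\<^sup>L (PiM I (\<lambda>_. NN)) (\<lambda>G. (LL I c G)^2) = ip I c c"
    and "integral\<^sup>L (PiM I (\<lambda>_. NN)) (\<lambda>G. (LL I c G)^4) = 3 * (ip I c c)^2"
proof -
  interpret P: prob_space "PiM I (\<lambda>_. NN)" by (rule GMI_prob)
  have "integrable (PiM I (\<lambda>_. NN)) (\<lambda>G. (LL I c G)^m) \<and>
    integral\<^sup>L (PiM I (\<lambda>_. NN)) (\<lambda>G. (LL I c G)^2) = ip I c c \<and>
    integral\<^sup>L (PiM I (\<lambda>_. NN)) (\<lambda>G. (LL I c G)^4) = 3 * (ip I c c)^2"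
  proof (cases "ip I c c > 0")
    case True
    define \<sigma> where "\<sigma> = sqrt (ip I c c)"
    have sp: "\<sigma> > 0" using True by (simp add: \<sigma>_def)
    have D: "distributed (PiM I (\<lambda>_. NN)) lborel (LL I c) (normal_density 0 \<sigma>)"
      using lin_normal[OF fin, of c] True
      by (simp add: LL_def[abs_def] ip_def \<sigma>_def power2_eq_square)
    have i: "integrable (PiM I (\<lambda>_. NN)) (\<lambda>G. (LL I c G)^m)" for m
      using distributed_integrable[OF D, of "\<lambda>x. x^m"] integrable_normal_moment[of \<sigma> 0 m, OF sp]
      by simp
    have e: "integral\<^sup>L (PiM I (\<lambda>_. NN)) (\<lambda>G. (LL I c G)^(2*k)) =
             fact (2 * k) / ((2 / \<sigma>\<^sup>2)^k * fact k)" for k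
      using distributed_integral[OF D, of "\<lambda>x. x^(2*k)"]
        has_bochner_integral_integral_eq[OF normal_moment_even[where \<sigma>=\<sigma> and \<mu>=0 and k=k, OF sp]]
      by simp
    have s2: "\<sigma>^2 = ip I c c" using True by (simp add: \<sigma>_def)
    show ?thesis using i e[of 1] e[of 2] sp s2
      by (simp add: fact_numeral power2_eq_square field_simps)
  next
    case False
    have "ip I c c \<ge> 0" unfolding ip_def by (auto intro: sum_nonneg)
    with False have z: "ip I c c = 0" by simp
    then have "\<forall>x\<in>I. c x * c x = 0"
      unfolding ip_def using sum_nonneg_eq_0_iff[OF fin, of "\<lambda>x. c x * c x"] by simp
    then have "LL I c G = 0" for G unfolding LL_def by simp
    then show ?thesis using z by (simp add: zero_power)
  qed
  then show "integrable (PiM I (\<lambda>_. NN)) (\<lambda>G. (LL I c G)^m)"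
    and "integral\<^sup>L (PiM I (\<lambda>_. NN)) (\<lambda>G. (LL I c G)^2) = ip I c c"
    and "integral\<^sup>L (PiM I (\<lambda>_. NN)) (\<lambda>G. (LL I c G)^4) = 3 * (ip I c c)^2" by auto
qed

lemma LL_lin: "LL I (\<lambda>x. a x + e2 * b x + e3 * c x + e4 * d x) G =
   LL I a G + e2 * LL I b G + e3 * LL I c G + e4 * LL I d G"
  unfolding LL_def by (simp add: sum.distrib sum_distrib_left algebra_simps)

lemma LL_lin2: "LL I (\<lambda>x. a x + e * b x) G = LL I a G + e * LL I b G"
  unfolding LL_def by (simp add: sum.distrib sum_distrib_left algebra_simps)

lemma ip_w: "ip I (\<lambda>x. a x + e2 * b x + e3 * c x + e4 * d x) (\<lambda>x. a x + e2 * b x + e3 * c x + e4 * d x)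
  = ip I a a + e2^2 * ip I b b + e3^2 * ip I c c + e4^2 * ip I d d + 2*e2*ip I a b + 2*e3*ip I a c
    + 2*e4*ip I a d + 2*e2*e3*ip I b c + 2*e2*e4*ip I b d + 2*e3*e4 * ip I c d"
  unfolding ip_def sum_distrib_left sum.distrib[symmetric]
  by (rule sum.cong) (auto simp: algebra_simps power2_eq_square)

lemma ip_w2: "ip I (\<lambda>x. a x + e * b x) (\<lambda>x. a x + e * b x) = ip I a a + e^2 * ip I b b + 2*e*ip I a b"
  unfolding ip_def sum_distrib_left sum.distrib[symmetric]
  by (rule sum.cong) (auto simp: algebra_simps power2_eq_square)

lemma ip_sym: "ip I a b = ip I b a" unfolding ip_def by (simp add: mult.commute)

lemma LL_cov:
  assumes fin: "finite I"
  shows "integrable (PiM I (\<lambda>_. NN)) (\<lambda>G. LL I a G * LL I b G)"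
    and "integral\<^sup>L (PiM I (\<lambda>_. NN)) (\<lambda>G. LL I a G * LL I b G) = ip I a b"
proof -
  let ?p = "\<lambda>x. a x + 1 * b x" and ?m = "\<lambda>x. a x + (-1) * b x"
  have eq: "LL I a G * LL I b G = ((LL I ?p G)^2 - (LL I ?m G)^2) / 4" for G
    unfolding LL_lin2 by (simp add: power2_eq_square algebra_simps)
  have i1: "integrable (PiM I (\<lambda>_. NN)) (\<lambda>G. (LL I ?p G)^2)"
    and i2: "integrable (PiM I (\<lambda>_. NN)) (\<lambda>G. (LL I ?m G)^2)"
    using LL_moments(1)[OF fin] by blast+
  show "integrable (PiM I (\<lambda>_. NN)) (\<lambda>G. LL I a G * LL I b G)"
    unfolding eq using i1 i2 by simp
  have "integral\<^sup>L (PiM I (\<lambda>_. NN)) (\<lambda>G. LL I a G * LL I b G) =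
        (integral\<^sup>L (PiM I (\<lambda>_. NN)) (\<lambda>G. (LL I ?p G)^2) -
         integral\<^sup>L (PiM I (\<lambda>_. NN)) (\<lambda>G. (LL I ?m G)^2)) / 4"
    unfolding eq using i1 i2 by simp
  also have "\<dots> = ip I a b"
    unfolding LL_moments(2)[OF fin] ip_w2 by (simp add: ip_sym[of I b a])
  finally show "integral\<^sup>L (PiM I (\<lambda>_. NN)) (\<lambda>G. LL I a G * LL I b G) = ip I a b" .
qed

lemma isserlis_poly:
  fixes A B C D :: real
  shows "A * B * C * D = (1/192) * ((A + (1) * B + (1) * C + (1) * D)^4 - (A + (1) * B + (1) * C + (-1) * D)^4 - (A + (1) * B + (-1) * C + (1) * D)^4 + (A + (1) * B + (-1) * C + (-1) * D)^4 - (A + (-1) * B + (1) * C + (1) * D)^4 + (A + (-1) * B + (1) * C + (-1) * D)^4 + (A + (-1) * B + (-1) * C + (1) * D)^4 - (A + (-1) * B + (-1) * C + (-1) * D)^4)"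
  by (simp add: algebra_simps power4_eq_xxxx power2_eq_square)

lemma LL_isserlis:
  assumes fin: "finite I"
  shows "integrable (PiM I (\<lambda>_. NN)) (\<lambda>G. LL I a G * LL I b G * LL I c G * LL I d G)"
    and "integral\<^sup>L (PiM I (\<lambda>_. NN)) (\<lambda>G. LL I a G * LL I b G * LL I c G * LL I d G) =
         ip I a b * ip I c d + ip I a c * ip I b d + ip I a d * ip I b c"
proof -
  have eq: "LL I a G * LL I b G * LL I c G * LL I d G = (1/192) * ((LL I (\<lambda>x. a x + (1) * b x + (1) * c x + (1) * d x) G)^4 - (LL I (\<lambda>x. a x + (1) * b x + (1) * c x + (-1) * d x) G)^4 - (LL I (\<lambda>x. a x + (1) * b x + (-1) * c x + (1) * d x) G)^4 + (LL I (\<lambda>x. a x + (1) * b x + (-1) * c x + (-1) * d x) G)^4 - (LL I (\<lambda>x. a x + (-1) * b x + (1) * c x + (1) * d x) G)^4 + (LL I (\<lambda>x. a x + (-1) * b x + (1) * c x + (-1) * d x) G)^4 + (LL I (\<lambda>x. a x + (-1) * b x + (-1) * c x + (1) * d x) G)^4 - (LL I (\<lambda>x. a x + (-1) * b x + (-1) * c x + (-1) * d x) G)^4)" for G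
    unfolding LL_lin by (rule isserlis_poly)
  have i: "integrable (PiM I (\<lambda>_. NN)) (\<lambda>G. (LL I w G)^4)" for w
    using LL_moments(1)[OF fin] by blast
  show "integrable (PiM I (\<lambda>_. NN)) (\<lambda>G. LL I a G * LL I b G * LL I c G * LL I d G)"
    unfolding eq using i by simp
  have "integral\<^sup>L (PiM I (\<lambda>_. NN)) (\<lambda>G. LL I a G * LL I b G * LL I c G * LL I d G) =
     (1/192) * (3 * (ip I (\<lambda>x. a x + (1) * b x + (1) * c x + (1) * d x) (\<lambda>x. a x + (1) * b x + (1) * c x + (1) * d x))^2 - 3 * (ip I (\<lambda>x. a x + (1) * b x + (1) * c x + (-1) * d x) (\<lambda>x. a x + (1) * b x + (1) * c x + (-1) * d x))^2 - 3 * (ip I (\<lambda>x. a x + (1) * b x + (-1) * c x + (1) * d x) (\<lambda>x. a x + (1) * b x + (-1) * c x + (1) * d x))^2 + 3 * (ip I (\<lambda>x. a x + (1) * b x + (-1) * c x + (-1) * d x) (\<lambda>x. a x + (1) * b x + (-1) * c x + (-1) * d x))^2 - 3 * (ip I (\<lambda>x. a x + (-1) * b x + (1) * c x + (1) * d x) (\<lambda>x. a x + (-1) * b x + (1) * c x + (1) * d x))^2 + 3 * (ip I (\<lambda>x. a x + (-1) * b x + (1) * c x + (-1) * d x) (\<lambda>x. a x + (-1) * b x + (1) * c x + (-1) * d x))^2 + 3 * (ip I (\<lambda>x. a x + (-1) * b x + (-1) * c x + (1) * d x) (\<lambda>x. a x + (-1) * b x + (-1) * c x + (1) * d x))^2 -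 3 * (ip I (\<lambda>x. a x + (-1) * b x + (-1) * c x + (-1) * d x) (\<lambda>x. a x + (-1) * b x + (-1) * c x + (-1) * d x))^2)"
    unfolding eq using i by (simp add: LL_moments(3)[OF fin])
  also have "\<dots> = ip I a b * ip I c d + ip I a c * ip I b d + ip I a d * ip I b c"
    unfolding ip_w by (simp add: ip_sym[of I b a] ip_sym[of I c a] ip_sym[of I d a]
       ip_sym[of I c b] ip_sym[of I d b] ip_sym[of I d c] algebra_simps power2_eq_square)
  finally show "integral\<^sup>L (PiM I (\<lambda>_. NN)) (\<lambda>G. LL I a G * LL I b G * LL I c G * LL I d G) =
         ip I a b * ip I c d + ip I a c * ip I b d + ip I a d * ip I b c" .
qed

lemma std_exp_eq: "std_normal_density x * exp (x^2/4) = sqrt 2 * normal_density 0 (sqrt 2) x"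
proof -
  have "std_normal_density x * exp (x^2/4) = (1 / sqrt (2*pi)) * exp (-(x^2)/4)"
  proof -
    have e: "exp (-(x^2/2)) * exp (x^2/4) = exp (-(x^2/4))"
      unfolding exp_add[symmetric] by (rule arg_cong[where f=exp]) (simp add: field_simps)
    show ?thesis by (simp add: std_normal_density_def mult.assoc e)
  qed
  also have "\<dots> = sqrt 2 * normal_density 0 (sqrt 2) x"
    by (simp add: normal_density_def real_sqrt_mult field_simps)
  finally show ?thesis .
qed

lemma LL_tail:
  assumes fin: "finite I" and one: "ip I c c = 1" and a: "a > 0"
  shows "measure (PiM I (\<lambda>_. NN)) {G \<in> space (PiM I (\<lambda>_. NN)). (LL I c G)^2 \<ge> a}
          \<le> sqrt 2 * exp (- a / 4)"
proof -
  interpret P: prob_space "PiM I (\<lambda>_. NN)" by (rule GMI_prob)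
  have D: "distributed (PiM I (\<lambda>_. NN)) lborel (LL I c) std_normal_density"
    using lin_normal[OF fin, of c] one
    by (simp add: LL_def[abs_def] ip_def power2_eq_square)
  have int1: "integrable lborel (\<lambda>x. std_normal_density x * exp (x^2/4))"
    unfolding std_exp_eq by simp
  have iM: "integrable (PiM I (\<lambda>_. NN)) (\<lambda>G. exp ((LL I c G)^2/4))"
    using distributed_integrable[OF D, of "\<lambda>x. exp (x^2/4)"] int1 by simp
  have E: "integral\<^sup>L (PiM I (\<lambda>_. NN)) (\<lambda>G. exp ((LL I c G)^2/4)) = sqrt 2"
    using distributed_integral[OF D, of "\<lambda>x. exp (x^2/4)"] unfolding std_exp_eq by simp
  have "{G \<in> space (PiM I (\<lambda>_. NN)). (LL I c G)^2 \<ge> a} =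
        {G \<in> space (PiM I (\<lambda>_. NN)). exp ((LL I c G)^2/4) \<ge> exp (a/4)}" by auto
  also have "measure (PiM I (\<lambda>_. NN)) \<dots> \<le> integral\<^sup>L (PiM I (\<lambda>_. NN)) (\<lambda>G. exp ((LL I c G)^2/4)) / exp (a/4)"
    by (rule integral_Markov_inequality_measure[OF iM, where A="space (PiM I (\<lambda>_. NN))"]) auto
  also have "\<dots> = sqrt 2 * exp (- a / 4)" unfolding E by (simp add: exp_minus field_simps)
  finally show ?thesis .
qed


lemma gram_eig:
  fixes M :: "nat \<times> nat \<Rightarrow> real" and x :: "nat \<Rightarrow> real"
  assumes diag: "\<forall>j<s. M(j,j) = 1"
    and off: "(\<Sum>j<s. \<Sum>l\<in>{..<s}-{j}. (M(j,l))\<^sup>2) \<le> 1/4"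
    and nz: "\<exists>j<s. x j \<noteq> 0"
    and ev: "\<forall>j<s. (\<Sum>l<s. M(j,l) * x l) = lm * x j"
  shows "(lm - 1)\<^sup>2 \<le> 1/4"
proof -
  define X where "X = (\<Sum>l<s. (x l)\<^sup>2)"
  have Xpos: "X > 0"
  proof -
    obtain j where j: "j < s" "x j \<noteq> 0" using nz by auto
    have "(x j)\<^sup>2 \<le> X" unfolding X_def
      by (rule member_le_sum) (use j in auto)
    moreover have "(x j)\<^sup>2 > 0" using j by simp
    ultimately show ?thesis by linarith
  qed
  have row: "((lm - 1) * x j)\<^sup>2 \<le> (\<Sum>l\<in>{..<s}-{j}. (M(j,l))\<^sup>2) * X" if j: "j < s" for j
  proof -
    have "(\<Sum>l<s. M(j,l) * x l) = M(j,j) * x j + (\<Sum>l\<in>{..<s}-{j}. M(j,l) * x l)"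
      using j by (subst sum.remove[of _ j]) auto
    then have e: "(lm - 1) * x j = (\<Sum>l\<in>{..<s}-{j}. M(j,l) * x l)"
      using ev diag j by (auto simp: algebra_simps)
    have "((lm - 1) * x j)\<^sup>2 \<le> (\<Sum>l\<in>{..<s}-{j}. (M(j,l))\<^sup>2) * (\<Sum>l\<in>{..<s}-{j}. (x l)\<^sup>2)"
      unfolding e by (rule Cauchy_Schwarz_ineq_sum)
    also have "\<dots> \<le> (\<Sum>l\<in>{..<s}-{j}. (M(j,l))\<^sup>2) * X"
      unfolding X_def by (intro mult_left_mono sum_mono2) (auto intro: sum_nonneg)
    finally show ?thesis .
  qed
  have "(lm - 1)\<^sup>2 * X = (\<Sum>j<s. ((lm - 1) * x j)\<^sup>2)"
    unfolding X_def by (simp add: sum_distrib_left power_mult_distrib)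
  also have "\<dots> \<le> (\<Sum>j<s. (\<Sum>l\<in>{..<s}-{j}. (M(j,l))\<^sup>2) * X)"
    by (rule sum_mono) (use row in auto)
  also have "\<dots> = (\<Sum>j<s. \<Sum>l\<in>{..<s}-{j}. (M(j,l))\<^sup>2) * X"
    by (simp add: sum_distrib_right)
  also have "\<dots> \<le> 1/4 * X" using off Xpos by (intro mult_right_mono) auto
  finally show ?thesis using Xpos by simp
qed

lemma sv_ok:
  fixes V :: rmat
  assumes diag: "\<forall>j<s. (\<Sum>i<p. V(i,j) * V(i,j)) = 1"
    and off: "(\<Sum>j<s. \<Sum>l\<in>{..<s}-{j}. (\<Sum>i<p. V(i,j) * V(i,l))\<^sup>2) \<le> 1/4"
    and sv: "singular_value p s V \<sigma>"
  shows "1/4 \<le> \<sigma> \<and> \<sigma> \<le> 4"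
proof -
  from sv obtain x where s0: "\<sigma> \<ge> 0" and nz: "\<exists>j<s. x j \<noteq> 0"
    and ev: "\<forall>j<s. (\<Sum>l<s. (\<Sum>i<p. V (i,j) * V (i,l)) * x l) = \<sigma>\<^sup>2 * x j"
    unfolding singular_value_def by blast
  have "(\<sigma>\<^sup>2 - 1)\<^sup>2 \<le> 1/4"
    by (rule gram_eig[where M="\<lambda>(j,l). \<Sum>i<p. V (i,j) * V (i,l)" and x=x and s=s])
       (use diag off nz ev in auto)
  then have "\<bar>\<sigma>\<^sup>2 - 1\<bar> \<le> \<bar>1/2\<bar>"
    unfolding abs_le_square_iff by (simp add: power2_eq_square)
  then have b: "1/2 \<le> \<sigma>\<^sup>2" "\<sigma>\<^sup>2 \<le> 3/2" by linarith+
  show ?thesis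
  proof
    show "1/4 \<le> \<sigma>"
    proof (rule ccontr)
      assume "\<not> 1/4 \<le> \<sigma>"
      then have "\<sigma>\<^sup>2 \<le> (1/4)\<^sup>2" using s0 by (intro power_mono) auto
      then show False using b by (simp add: power2_eq_square)
    qed
    show "\<sigma> \<le> 4"
    proof (rule ccontr)
      assume "\<not> \<sigma> \<le> 4"
      then have "4\<^sup>2 \<le> \<sigma>\<^sup>2" by (intro power_mono) auto
      then show False using b by simp
    qed
  qed
qed


definition cf :: "rmat \<Rightarrow> nat \<Rightarrow> nat \<Rightarrow> nat \<times> nat \<Rightarrow> real" where
  "cf U j i = (\<lambda>x. if fst x = j then U (snd x, i) else 0)"

definition orthc :: "nat \<Rightarrow> rmat \<Rightarrow> bool" where
  "orthc n U \<longleftrightarrow> (\<forall>i<n. \<forall>j<n. (\<Sum>l<n. U (l,i) * U (l,j)) = (if i = j then 1 else 0))"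

lemma sum_delta_fst:
  fixes s n j :: nat
  assumes "j < s"
  shows "(\<Sum>x\<in>{..<s}\<times>{..<n}. (if fst x = j then f (snd x) else 0)) = (\<Sum>b<n. f b)"
proof -
  have "(\<Sum>x\<in>{..<s}\<times>{..<n}. (if fst x = j then f (snd x) else 0)) =
        (\<Sum>a<s. \<Sum>b<n. (if a = j then f b else 0))"
    by (simp add: sum.cartesian_product case_prod_beta)
  also have "\<dots> = (\<Sum>a<s. if a = j then (\<Sum>b<n. f b) else 0)"
    by (rule sum.cong) auto
  also have "\<dots> = (if j \<in> {..<s} then (\<Sum>b<n. f b) else 0)"
    by (simp only: sum.delta[OF finite_lessThan])
  also have "\<dots> = (\<Sum>b<n. f b)" using assms by simp
  finally show ?thesis .
qed

lemma gdotu_LL: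
  assumes "j < s"
  shows "gdotu n U G j i = LL ({..<s}\<times>{..<n}) (cf U j i) G"
proof -
  have "LL ({..<s}\<times>{..<n}) (cf U j i) G =
     (\<Sum>x\<in>{..<s}\<times>{..<n}. (if fst x = j then U (snd x, i) * G (j, snd x) else 0))"
    unfolding LL_def cf_def by (rule sum.cong) auto
  also have "\<dots> = (\<Sum>b<n. U (b, i) * G (j, b))" by (rule sum_delta_fst[OF assms])
  finally show ?thesis unfolding gdotu_def by (simp add: mult.commute)
qed

lemma ip_cf:
  assumes "j < s" "l < s" "orthc n U" "i < n" "i' < n"
  shows "ip ({..<s}\<times>{..<n}) (cf U j i) (cf U l i') = (if j = l \<and> i = i' then 1 else 0)"
proof (cases "j = l")
  case True
  have "ip ({..<s}\<times>{..<n}) (cf U j i) (cf U l i') =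
     (\<Sum>x\<in>{..<s}\<times>{..<n}. (if fst x = j then U (snd x, i) * U (snd x, i') else 0))"
    unfolding ip_def cf_def using True by (intro sum.cong) auto
  also have "\<dots> = (\<Sum>b<n. U (b, i) * U (b, i'))" by (rule sum_delta_fst[OF assms(1)])
  finally show ?thesis using assms True unfolding orthc_def by auto
next
  case False
  then show ?thesis unfolding ip_def cf_def by (auto intro!: sum.neutral)
qed

lemma proj_inner:
  assumes "orthc n U" "E \<subseteq> {..<n}"
  shows "(\<Sum>m<n. (\<Sum>i\<in>E. a i * U (m,i)) * (\<Sum>i\<in>E. b i * U (m,i))) = (\<Sum>i\<in>E. a i * b i)"
proof -
  have fE: "finite E" using assms(2) finite_subset by blast
  have "(\<Sum>m<n. (\<Sum>i\<in>E. a i * U (m,i)) * (\<Sum>i\<in>E. b i * U (m,i))) =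
        (\<Sum>m<n. \<Sum>i\<in>E. \<Sum>i'\<in>E. a i * b i' * (U (m,i) * U (m,i')))"
    by (simp add: sum_product algebra_simps)
  also have "\<dots> = (\<Sum>i\<in>E. \<Sum>i'\<in>E. a i * b i' * (\<Sum>m<n. U (m,i) * U (m,i')))"
    by (simp add: sum.swap[of _ "{..<n}"] sum_distrib_left)
  also have "\<dots> = (\<Sum>i\<in>E. \<Sum>i'\<in>E. if i = i' then a i * b i' else 0)"
  proof -
    have o: "(\<Sum>m<n. U (m,i) * U (m,i')) = (if i = i' then 1 else 0)" if "i \<in> E" "i' \<in> E" for i i'
    proof -
      have "i < n" "i' < n" using that assms(2) by auto
      then show ?thesis using assms(1) unfolding orthc_def by blast
    qed
    show ?thesis by (intro sum.cong refl) (simp add: o)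
  qed
  also have "\<dots> = (\<Sum>i\<in>E. a i * b i)"
    using fE by (simp add: sum.delta)
  finally show ?thesis .
qed


abbreviation "IX s n \<equiv> {..<s}\<times>{..<n}"
abbreviation "GMX s n \<equiv> PiM (IX s n) (\<lambda>_. NN)"

lemma H4:
  assumes "j < s" "l < s" "orthc n U" "i < n" "i' < n"
  shows "integrable (GMX s n) (\<lambda>G. LL (IX s n) (cf U j i) G * LL (IX s n) (cf U l i) G *
                                  LL (IX s n) (cf U j i') G * LL (IX s n) (cf U l i') G)"
    and "integral\<^sup>L (GMX s n) (\<lambda>G. LL (IX s n) (cf U j i) G * LL (IX s n) (cf U l i) G *
                                  LL (IX s n) (cf U j i') G * LL (IX s n) (cf U l i') G)
         = (if j = l then 1 else 0) + (if i = i' then 1 else 0) + (if j = l \<and> i = i' then 1 else 0)"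
  using LL_isserlis[of "IX s n" "cf U j i" "cf U l i" "cf U j i'" "cf U l i'"]
  by (auto simp: ip_cf assms)

lemma Asq_moments:
  assumes j: "j < s" and o: "orthc n U" and E: "E \<subseteq> {..<n}"
  defines "A \<equiv> \<lambda>G. (\<Sum>i\<in>E. (LL (IX s n) (cf U j i) G)\<^sup>2)"
  shows "integrable (GMX s n) A" "integral\<^sup>L (GMX s n) A = card E"
    "integrable (GMX s n) (\<lambda>G. (A G)\<^sup>2)" "integral\<^sup>L (GMX s n) (\<lambda>G. (A G)\<^sup>2) = (card E)^2 + 2 * card E"
proof -
  have fE: "finite E" using E finite_subset by blast
  have fin: "finite (IX s n)" by simp
  have i1: "integrable (GMX s n) (\<lambda>G. (LL (IX s n) (cf U j i) G)\<^sup>2)" for i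
    using LL_moments(1)[OF fin] by blast
  show "integrable (GMX s n) A" unfolding A_def using i1 by (intro Bochner_Integration.integrable_sum) auto
  have "integral\<^sup>L (GMX s n) A = (\<Sum>i\<in>E. integral\<^sup>L (GMX s n) (\<lambda>G. (LL (IX s n) (cf U j i) G)\<^sup>2))"
    unfolding A_def by (rule Bochner_Integration.integral_sum) (use i1 in auto)
  also have "\<dots> = (\<Sum>i\<in>E. 1)"
    by (intro sum.cong refl) (use E in \<open>auto simp: LL_moments(2)[OF fin] ip_cf j o\<close>)
  finally show "integral\<^sup>L (GMX s n) A = card E" by simp
  have sq: "(A G)\<^sup>2 = (\<Sum>i\<in>E. \<Sum>i'\<in>E. LL (IX s n) (cf U j i) G * LL (IX s n) (cf U j i) G *
                                  LL (IX s n) (cf U j i') G * LL (IX s n) (cf U j i') G)" for G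
    unfolding A_def power2_eq_square sum_product by (simp add: algebra_simps)
  have i4: "integrable (GMX s n) (\<lambda>G. LL (IX s n) (cf U j i) G * LL (IX s n) (cf U j i) G *
                                  LL (IX s n) (cf U j i') G * LL (IX s n) (cf U j i') G)"
    if "i \<in> E" "i' \<in> E" for i i'
    using H4(1)[OF j j o, of i i'] that E by auto
  show "integrable (GMX s n) (\<lambda>G. (A G)\<^sup>2)"
    unfolding sq using i4 by (intro Bochner_Integration.integrable_sum) auto
  have "integral\<^sup>L (GMX s n) (\<lambda>G. (A G)\<^sup>2) =
     (\<Sum>i\<in>E. \<Sum>i'\<in>E. integral\<^sup>L (GMX s n) (\<lambda>G. LL (IX s n) (cf U j i) G * LL (IX s n) (cf U j i) G *
                                  LL (IX s n) (cf U j i') G * LL (IX s n) (cf U j i') G))"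
    unfolding sq using i4
    by (subst Bochner_Integration.integral_sum, auto intro!: Bochner_Integration.integrable_sum sum.cong Bochner_Integration.integral_sum)
  also have "\<dots> = (\<Sum>i\<in>E. \<Sum>i'\<in>E. 1 + 2 * (if i = i' then 1 else 0))"
  proof (intro sum.cong refl)
    fix i i' assume "i \<in> E" "i' \<in> E"
    then have "i < n" "i' < n" using E by auto
    then show "integral\<^sup>L (GMX s n) (\<lambda>G. LL (IX s n) (cf U j i) G * LL (IX s n) (cf U j i) G *
                                  LL (IX s n) (cf U j i') G * LL (IX s n) (cf U j i') G) =
      1 + 2 * (if i = i' then 1 else 0)" using H4(2)[OF j j o] by simp
  qed
  also have "\<dots> = (\<Sum>i\<in>E. real (card E) + 2)"
    using fE by (intro sum.cong refl) (simp add: sum.distrib sum_distrib_left[symmetric])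
  also have "\<dots> = (card E)^2 + 2 * card E" by (simp add: power2_eq_square algebra_simps)
  finally show "integral\<^sup>L (GMX s n) (\<lambda>G. (A G)\<^sup>2) = (card E)^2 + 2 * card E" .
qed

lemma Asq_var:
  assumes j: "j < s" and o: "orthc n U" and E: "E \<subseteq> {..<n}"
  defines "A \<equiv> \<lambda>G. (\<Sum>i\<in>E. (LL (IX s n) (cf U j i) G)\<^sup>2)"
  shows "integrable (GMX s n) (\<lambda>G. (A G - card E)\<^sup>2)"
    "integral\<^sup>L (GMX s n) (\<lambda>G. (A G - card E)\<^sup>2) = 2 * card E"
proof -
  interpret P: prob_space "GMX s n" by (rule GMI_prob)
  have m1: "integrable (GMX s n) A" using Asq_moments(1)[OF j o E] unfolding A_def .
  have m2: "integral\<^sup>L (GMX s n) A = card E" using Asq_moments(2)[OF j o E] unfolding A_def .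
  have m3: "integrable (GMX s n) (\<lambda>G. (A G)\<^sup>2)" using Asq_moments(3)[OF j o E] unfolding A_def .
  have m4: "integral\<^sup>L (GMX s n) (\<lambda>G. (A G)\<^sup>2) = (card E)^2 + 2 * card E"
    using Asq_moments(4)[OF j o E] unfolding A_def .
  note m = m1 m2 m3 m4
  have eq: "(A G - card E)\<^sup>2 = (A G)\<^sup>2 - 2 * card E * A G + (card E)^2" for G
    by (simp add: power2_eq_square algebra_simps)
  show "integrable (GMX s n) (\<lambda>G. (A G - card E)\<^sup>2)"
    unfolding eq using m by auto
  show "integral\<^sup>L (GMX s n) (\<lambda>G. (A G - card E)\<^sup>2) = 2 * card E"
    unfolding eq using m by (simp add: power2_eq_square algebra_simps P.prob_space)
qed

lemma B_moment:
  assumes j: "j < s" and l: "l < s" and jl: "j \<noteq> l" and o: "orthc n U" and E: "E \<subseteq> {..<n}"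
  defines "B \<equiv> \<lambda>G. (\<Sum>i\<in>E. LL (IX s n) (cf U j i) G * LL (IX s n) (cf U l i) G)"
  shows "integrable (GMX s n) (\<lambda>G. (B G)\<^sup>2)" "integral\<^sup>L (GMX s n) (\<lambda>G. (B G)\<^sup>2) = card E"
proof -
  have fE: "finite E" using E finite_subset by blast
  have sq: "(B G)\<^sup>2 = (\<Sum>i\<in>E. \<Sum>i'\<in>E. LL (IX s n) (cf U j i) G * LL (IX s n) (cf U l i) G *
                                  LL (IX s n) (cf U j i') G * LL (IX s n) (cf U l i') G)" for G
    unfolding B_def power2_eq_square sum_product by (simp add: algebra_simps)
  have i4: "integrable (GMX s n) (\<lambda>G. LL (IX s n) (cf U j i) G * LL (IX s n) (cf U l i) G *
                                  LL (IX s n) (cf U j i') G * LL (IX s n) (cf U l i') G)"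
    if "i \<in> E" "i' \<in> E" for i i'
    using H4(1)[OF j l o, of i i'] that E by auto
  show "integrable (GMX s n) (\<lambda>G. (B G)\<^sup>2)"
    unfolding sq using i4 by (intro Bochner_Integration.integrable_sum) auto
  have "integral\<^sup>L (GMX s n) (\<lambda>G. (B G)\<^sup>2) =
     (\<Sum>i\<in>E. \<Sum>i'\<in>E. integral\<^sup>L (GMX s n) (\<lambda>G. LL (IX s n) (cf U j i) G * LL (IX s n) (cf U l i) G *
                                  LL (IX s n) (cf U j i') G * LL (IX s n) (cf U l i') G))"
    unfolding sq using i4
    by (subst Bochner_Integration.integral_sum, auto intro!: Bochner_Integration.integrable_sum sum.cong Bochner_Integration.integral_sum)
  also have "\<dots> = (\<Sum>i\<in>E. \<Sum>i'\<in>E. (if i = i' then 1 else 0))"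
  proof (intro sum.cong refl)
    fix i i' assume "i \<in> E" "i' \<in> E"
    then have "i < n" "i' < n" using E by auto
    then show "integral\<^sup>L (GMX s n) (\<lambda>G. LL (IX s n) (cf U j i) G * LL (IX s n) (cf U l i) G *
                                  LL (IX s n) (cf U j i') G * LL (IX s n) (cf U l i') G) =
      (if i = i' then 1 else 0)" using H4(2)[OF j l o] jl by simp
  qed
  also have "\<dots> = card E" using fE by simp
  finally show "integral\<^sup>L (GMX s n) (\<lambda>G. (B G)\<^sup>2) = card E" .
qed


abbreviation "Et \<epsilon> r k n t \<equiv> {i. i < n \<and> Ddiag \<epsilon> r k i = lam \<epsilon> r t}"

lemma Et_sub: "Et \<epsilon> r k n t \<subseteq> {..<n}" by auto

lemma Pg_inner:
  assumes "orthc n U"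
  shows "(\<Sum>m<n. Pg \<epsilon> r k n U G t j m * Pg \<epsilon> r k n U G t l m) =
         (\<Sum>i\<in>Et \<epsilon> r k n t. gdotu n U G j i * gdotu n U G l i)"
  unfolding Pg_def by (rule proj_inner[OF assms Et_sub])

lemma acoef_eq:
  assumes "orthc n U"
  shows "acoef \<epsilon> r k n U G t j = sqrt (\<Sum>i\<in>Et \<epsilon> r k n t. (gdotu n U G j i)\<^sup>2)"
  unfolding acoef_def power2_eq_square Pg_inner[OF assms] ..

lemma gram_eq:
  assumes "orthc n U" "j < s" "l < s"
  shows "(\<Sum>i<n. Vmat \<epsilon> r k n s U G t (i,j) * Vmat \<epsilon> r k n s U G t (i,l)) =
     (\<Sum>i\<in>Et \<epsilon> r k n t. gdotu n U G j i * gdotu n U G l i) /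
        (acoef \<epsilon> r k n U G t j * acoef \<epsilon> r k n U G t l)"
proof -
  have "(\<Sum>i<n. Vmat \<epsilon> r k n s U G t (i,j) * Vmat \<epsilon> r k n s U G t (i,l)) =
     (\<Sum>i<n. Pg \<epsilon> r k n U G t j i * Pg \<epsilon> r k n U G t l i) /
        (acoef \<epsilon> r k n U G t j * acoef \<epsilon> r k n U G t l)"
    unfolding sum_divide_distrib using assms(2,3) by (intro sum.cong refl) (auto simp: Vmat_def)
  then show ?thesis unfolding Pg_inner[OF assms(1)] .
qed

lemma nice_good:
  fixes \<epsilon> :: real and n r s k :: nat and U G :: rmat
  assumes o: "orthc n U" and kpos: "k > 0"
    and N1: "\<forall>j<s. (gdotu n U G j 0)\<^sup>2 < 25 * ln (real n)"
    and N2: "\<forall>j<s. \<forall>t\<in>{2..r+2}. ((\<Sum>i\<in>Et \<epsilon> r k n t. (gdotu n U G j i)\<^sup>2) - k)\<^sup>2 < 9 * (real k)\<^sup>2 / 16"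
    and N3: "(\<Sum>t\<in>{2..r+2}. \<Sum>j<s. \<Sum>l\<in>{..<s}-{j}.
               (\<Sum>i\<in>Et \<epsilon> r k n t. gdotu n U G j i * gdotu n U G l i)\<^sup>2) < (real k)\<^sup>2 / 64"
  shows "good_event \<epsilon> n r s k U G"
proof -
  let ?g = "gdotu n U G"
  let ?a = "acoef \<epsilon> r k n U G"
  let ?A = "\<lambda>t j. (\<Sum>i\<in>Et \<epsilon> r k n t. (?g j i)\<^sup>2)"
  let ?B = "\<lambda>t j l. (\<Sum>i\<in>Et \<epsilon> r k n t. ?g j i * ?g l i)"
  have c1: "\<bar>?g j 0\<bar> \<le> 5 * sqrt (ln (real n))" if "j < s" for j
  proof -
    have "\<bar>?g j 0\<bar> = sqrt ((?g j 0)\<^sup>2)" by simp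
    also have "\<dots> \<le> sqrt (25 * ln (real n))" using N1 that by (intro real_sqrt_le_mono) auto
    also have "\<dots> = 5 * sqrt (ln (real n))" by (simp add: real_sqrt_mult)
    finally show ?thesis .
  qed
  have Abnd: "real k / 4 < ?A t j \<and> ?A t j < 7 * real k / 4" if "j < s" "t \<in> {2..r+2}" for j t
  proof -
    have "(?A t j - k)\<^sup>2 < (3 * real k / 4)\<^sup>2" using N2 that by (simp add: power2_eq_square)
    then have "\<bar>?A t j - k\<bar> < \<bar>3 * real k / 4\<bar>" by (metis abs_le_square_iff not_le)
    then show ?thesis unfolding abs_less_iff by auto
  qed
  have c2: "0.5 * sqrt (real k) \<le> ?a t j \<and> ?a t j \<le> 2 * sqrt (real k)" if "j < s" "t \<in> {2..r+2}" for j t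
  proof -
    have a: "?a t j = sqrt (?A t j)" by (rule acoef_eq[OF o])
    have "0.5 * sqrt (real k) = sqrt (real k / 4)" by (simp add: real_sqrt_divide)
    also have "\<dots> \<le> sqrt (?A t j)" using Abnd[OF that] by (intro real_sqrt_le_mono) auto
    finally have l: "0.5 * sqrt (real k) \<le> ?a t j" using a by simp
    have "sqrt (?A t j) \<le> sqrt (4 * real k)" using Abnd[OF that] by (intro real_sqrt_le_mono) auto
    also have "\<dots> = 2 * sqrt (real k)" by (simp add: real_sqrt_mult)
    finally show ?thesis using l a by simp
  qed
  have c3: "1/4 \<le> \<sigma> \<and> \<sigma> \<le> 4" if t: "t \<in> {2..r+2}" and sv: "singular_value n s (Vmat \<epsilon> r k n s U G t) \<sigma>" for t \<sigma>
  proof (rule sv_ok[OF _ _ sv])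
    have apos: "?a t j > 0" if "j < s" for j
    proof -
      have "sqrt (real k) > 0" using kpos by simp
      then show ?thesis using c2[OF that t] by linarith
    qed
    have asq: "?a t j * ?a t j = ?A t j" if "j < s" for j
    proof -
      have "?A t j \<ge> 0" by (auto intro: sum_nonneg)
      then show ?thesis unfolding acoef_eq[OF o] by simp
    qed
    show "\<forall>j<s. (\<Sum>i<n. Vmat \<epsilon> r k n s U G t (i, j) * Vmat \<epsilon> r k n s U G t (i, j)) = 1"
    proof (intro allI impI)
      fix j assume j: "j < s"
      have e: "?B t j j = ?a t j * ?a t j" using asq[OF j] by (simp add: power2_eq_square)
      have "?a t j * ?a t j \<noteq> 0" using apos[OF j] by simp
      then show "(\<Sum>i<n. Vmat \<epsilon> r k n s U G t (i, j) * Vmat \<epsilon> r k n s U G t (i, j)) = 1"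
        unfolding gram_eq[OF o j j] e by simp
    qed
    have off: "(\<Sum>i<n. Vmat \<epsilon> r k n s U G t (i, j) * Vmat \<epsilon> r k n s U G t (i, l))\<^sup>2
               \<le> 16 * (?B t j l)\<^sup>2 / (real k)\<^sup>2" if j: "j < s" and l: "l < s" for j l
    proof -
      have kk: "real k / 4 \<le> ?a t j * ?a t l"
      proof -
        have "(0.5 * sqrt (real k)) * (0.5 * sqrt (real k)) \<le> ?a t j * ?a t l"
          using c2[OF j t] c2[OF l t] by (intro mult_mono) auto
        then show ?thesis by simp
      qed
      have kp: "real k / 4 > 0" using kpos by simp
      have "(\<Sum>i<n. Vmat \<epsilon> r k n s U G t (i, j) * Vmat \<epsilon> r k n s U G t (i, l))\<^sup>2
          = (?B t j l)\<^sup>2 / (?a t j * ?a t l)\<^sup>2"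
        unfolding gram_eq[OF o j l] by (simp add: power_divide)
      also have "\<dots> \<le> (?B t j l)\<^sup>2 / (real k / 4)\<^sup>2"
      proof (rule divide_left_mono)
        show "(real k / 4)\<^sup>2 \<le> (?a t j * ?a t l)\<^sup>2" using kk kp by (intro power_mono) auto
        show "0 \<le> (?B t j l)\<^sup>2" by simp
        have "?a t j * ?a t l > 0" using kk kp by linarith
        then have "(?a t j * ?a t l)\<^sup>2 > 0" by (rule zero_less_power)
        then show "0 < (?a t j * ?a t l)\<^sup>2 * (real k / 4)\<^sup>2" using kp by simp
      qed
      also have "\<dots> = 16 * (?B t j l)\<^sup>2 / (real k)\<^sup>2" by (simp add: power_divide)
      finally show ?thesis .
    qed
    have "(\<Sum>j<s. \<Sum>l\<in>{..<s} - {j}. (\<Sum>i<n. Vmat \<epsilon> r k n s U G t (i, j) * Vmat \<epsilon> r k n s U G t (i, l))\<^sup>2)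
        \<le> (\<Sum>j<s. \<Sum>l\<in>{..<s} - {j}. 16 * (?B t j l)\<^sup>2 / (real k)\<^sup>2)"
      using off by (intro sum_mono) auto
    also have "\<dots> = 16 / (real k)\<^sup>2 * (\<Sum>j<s. \<Sum>l\<in>{..<s} - {j}. (?B t j l)\<^sup>2)"
      by (simp add: sum_distrib_left)
    also have "\<dots> \<le> 16 / (real k)\<^sup>2 * (\<Sum>t\<in>{2..r+2}. \<Sum>j<s. \<Sum>l\<in>{..<s} - {j}. (?B t j l)\<^sup>2)"
      using t by (intro mult_left_mono member_le_sum) (auto intro!: sum_nonneg)
    also have "\<dots> \<le> 16 / (real k)\<^sup>2 * ((real k)\<^sup>2 / 64)"
      using N3 by (intro mult_left_mono) auto
    also have "\<dots> = 1/4" using kpos by simp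
    finally show "(\<Sum>j<s. \<Sum>l\<in>{..<s} - {j}. (\<Sum>i<n. Vmat \<epsilon> r k n s U G t (i, j) * Vmat \<epsilon> r k n s U G t (i, l))\<^sup>2) \<le> 1/4" .
  qed
  show ?thesis unfolding good_event_def using c1 c2 c3 by blast
qed


lemma per_U:
  fixes \<epsilon> :: real and n r s k :: nat and U :: rmat
  assumes o: "orthc n U" and n2: "n \<ge> 2" and kpos: "k > 0"
    and card: "\<forall>t\<in>{2..r+2}. card (Et \<epsilon> r k n t) = k"
  shows "\<exists>N \<in> sets (GMX s n). N \<subseteq> {G \<in> space (GMX s n). good_event \<epsilon> n r s k U G} \<and>
     measure (GMX s n) N \<ge> 1 - (s * (sqrt 2 * exp (- (25 * ln (real n)) / 4))
                                + s * (r + 1) * (32 / (9 * k)) + 64 * (r + 1) * s * s / k)"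
proof -
  interpret P: prob_space "GMX s n" by (rule GMI_prob)
  let ?I = "IX s n"
  let ?H = "\<lambda>j i G. LL ?I (cf U j i) G"
  let ?T = "{2..r+2}"
  define A where "A = (\<lambda>t j G. \<Sum>i\<in>Et \<epsilon> r k n t. (?H j i G)\<^sup>2)"
  define B where "B = (\<lambda>t j l G. \<Sum>i\<in>Et \<epsilon> r k n t. ?H j i G * ?H l i G)"
  define X where "X = (\<lambda>G. \<Sum>t\<in>?T. \<Sum>j<s. \<Sum>l\<in>{..<s}-{j}. (B t j l G)\<^sup>2)"
  define B1 where "B1 = (\<lambda>j. {G \<in> space (GMX s n). 25 * ln (real n) \<le> (?H j 0 G)\<^sup>2})"
  define B2 where "B2 = (\<lambda>j t. {G \<in> space (GMX s n). 9 * (real k)\<^sup>2 / 16 \<le> (A t j G - k)\<^sup>2})"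
  define B3 where "B3 = {G \<in> space (GMX s n). (real k)\<^sup>2 / 64 \<le> X G}"
  define N where "N = space (GMX s n) - ((\<Union>j<s. B1 j) \<union> (\<Union>j<s. \<Union>t\<in>?T. B2 j t) \<union> B3)"
  have fin: "finite ?I" by simp
  have mA[measurable]: "A t j \<in> borel_measurable (GMX s n)" for t j
    unfolding A_def using LL_meas[OF fin] by measurable
  have mX[measurable]: "X \<in> borel_measurable (GMX s n)"
    unfolding X_def B_def using LL_meas[OF fin] by measurable
  have sB1[measurable]: "B1 j \<in> sets (GMX s n)" for j
    unfolding B1_def using LL_meas[OF fin] by measurable
  have sB2[measurable]: "B2 j t \<in> sets (GMX s n)" for j t
    unfolding B2_def by measurable
  have sB3[measurable]: "B3 \<in> sets (GMX s n)"
    unfolding B3_def by measurable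
  have sN: "N \<in> sets (GMX s n)" unfolding N_def by measurable
  have sub: "N \<subseteq> {G \<in> space (GMX s n). good_event \<epsilon> n r s k U G}"
  proof safe
    fix G assume G: "G \<in> N"
    then have Gs: "G \<in> space (GMX s n)" unfolding N_def by auto
    show "G \<in> space (GMX s n)" by (fact Gs)
    have g: "gdotu n U G j i = ?H j i G" if "j < s" for j i using gdotu_LL[OF that] .
    show "good_event \<epsilon> n r s k U G"
    proof (rule nice_good[OF o kpos])
      show "\<forall>j<s. (gdotu n U G j 0)\<^sup>2 < 25 * ln (real n)"
        using G g unfolding N_def B1_def by (auto simp: not_le)
      show "\<forall>j<s. \<forall>t\<in>{2..r + 2}. ((\<Sum>i\<in>Et \<epsilon> r k n t. (gdotu n U G j i)\<^sup>2) - real k)\<^sup>2 < 9 * (real k)\<^sup>2 / 16"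
        using G g unfolding N_def B2_def A_def by (auto simp: not_le)
      have "(\<Sum>t\<in>{2..r + 2}. \<Sum>j<s. \<Sum>l\<in>{..<s} - {j}. (\<Sum>i\<in>Et \<epsilon> r k n t. gdotu n U G j i * gdotu n U G l i)\<^sup>2) = X G"
        unfolding X_def B_def by (intro sum.cong refl) (auto simp: g)
      then show "(\<Sum>t\<in>{2..r + 2}. \<Sum>j<s. \<Sum>l\<in>{..<s} - {j}. (\<Sum>i\<in>Et \<epsilon> r k n t. gdotu n U G j i * gdotu n U G l i)\<^sup>2) < (real k)\<^sup>2 / 64"
        using G Gs unfolding N_def B3_def by (auto simp: not_le)
    qed
  qed
  have p1: "P.prob (B1 j) \<le> sqrt 2 * exp (- (25 * ln (real n)) / 4)" if "j < s" for j
  proof -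
    have "ip ?I (cf U j 0) (cf U j 0) = 1" using ip_cf[OF that that o, of 0 0] n2 by simp
    moreover have "25 * ln (real n) > 0" using n2 by simp
    ultimately show ?thesis unfolding B1_def by (intro LL_tail[OF fin]) auto
  qed
  have p2: "P.prob (B2 j t) \<le> 32 / (9 * k)" if "j < s" "t \<in> ?T" for j t
  proof -
    have ck: "card (Et \<epsilon> r k n t) = k" using card that by auto
    have i: "integrable (GMX s n) (\<lambda>G. (A t j G - k)\<^sup>2)"
      using Asq_var(1)[OF that(1) o Et_sub[of n \<epsilon> r k t]] unfolding A_def ck .
    have e: "integral\<^sup>L (GMX s n) (\<lambda>G. (A t j G - k)\<^sup>2) = 2 * k"
      using Asq_var(2)[OF that(1) o Et_sub[of n \<epsilon> r k t]] unfolding A_def ck .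
    have "P.prob (B2 j t) \<le> integral\<^sup>L (GMX s n) (\<lambda>G. (A t j G - k)\<^sup>2) / (9 * (real k)\<^sup>2 / 16)"
      unfolding B2_def
      by (rule integral_Markov_inequality_measure[OF i, where A="space (GMX s n)"]) (use kpos in auto)
    also have "\<dots> = 32 / (9 * k)" unfolding e using kpos by (simp add: power2_eq_square field_simps)
    finally show ?thesis .
  qed
  have p3: "P.prob B3 \<le> 64 * (r + 1) * s * s / k"
  proof -
    have iB: "integrable (GMX s n) (\<lambda>G. (B t j l G)\<^sup>2)"
      and eB: "integral\<^sup>L (GMX s n) (\<lambda>G. (B t j l G)\<^sup>2) = k"
      if "t \<in> ?T" "j < s" "l < s" "j \<noteq> l" for t j l
    proof -
      have ck: "card (Et \<epsilon> r k n t) = k" using card that by auto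
      show "integrable (GMX s n) (\<lambda>G. (B t j l G)\<^sup>2)"
        using B_moment(1)[OF that(2,3,4) o Et_sub[of n \<epsilon> r k t]] unfolding B_def .
      show "integral\<^sup>L (GMX s n) (\<lambda>G. (B t j l G)\<^sup>2) = k"
        using B_moment(2)[OF that(2,3,4) o Et_sub[of n \<epsilon> r k t]] unfolding B_def ck .
    qed
    have Xnn: "X G \<ge> 0" for G unfolding X_def by (intro sum_nonneg) auto
    have iX: "integrable (GMX s n) X"
      unfolding X_def using iB by (intro Bochner_Integration.integrable_sum) auto
    have i2: "integrable (GMX s n) (\<lambda>G. \<Sum>l\<in>{..<s}-{j}. (B t j l G)\<^sup>2)" if "t \<in> ?T" "j < s" for t j
      using iB that by (intro Bochner_Integration.integrable_sum) auto
    have i1: "integrable (GMX s n) (\<lambda>G. \<Sum>j<s. \<Sum>l\<in>{..<s}-{j}. (B t j l G)\<^sup>2)" if "t \<in> ?T" for t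
      using i2 that by (rule_tac Bochner_Integration.integrable_sum) auto
    have "integral\<^sup>L (GMX s n) X = (\<Sum>t\<in>?T. integral\<^sup>L (GMX s n) (\<lambda>G. \<Sum>j<s. \<Sum>l\<in>{..<s}-{j}. (B t j l G)\<^sup>2))"
      unfolding X_def by (rule Bochner_Integration.integral_sum) (use i1 in auto)
    also have "\<dots> = (\<Sum>t\<in>?T. \<Sum>j<s. integral\<^sup>L (GMX s n) (\<lambda>G. \<Sum>l\<in>{..<s}-{j}. (B t j l G)\<^sup>2))"
      by (intro sum.cong refl Bochner_Integration.integral_sum) (use i2 in auto)
    also have "\<dots> = (\<Sum>t\<in>?T. \<Sum>j<s. \<Sum>l\<in>{..<s}-{j}. integral\<^sup>L (GMX s n) (\<lambda>G. (B t j l G)\<^sup>2))"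
      by (intro sum.cong refl Bochner_Integration.integral_sum) (use iB in auto)
    also have "\<dots> = (\<Sum>t\<in>?T. \<Sum>j<s. \<Sum>l\<in>{..<s}-{j}. real k)"
      using eB by (intro sum.cong refl) auto
    also have "\<dots> \<le> (\<Sum>t\<in>?T. \<Sum>j<s. \<Sum>l<s. real k)"
      by (intro sum_mono sum_mono2) auto
    also have "\<dots> = (r + 1) * s * s * k" by (simp add: algebra_simps)
    finally have eX: "integral\<^sup>L (GMX s n) X \<le> (r + 1) * s * s * k" .
    have "P.prob B3 \<le> integral\<^sup>L (GMX s n) X / ((real k)\<^sup>2 / 64)"
      unfolding B3_def
      by (rule integral_Markov_inequality_measure[OF iX, where A="space (GMX s n)"])
         (use kpos Xnn in auto)
    also have "\<dots> \<le> ((r + 1) * s * s * k) / ((real k)\<^sup>2 / 64)"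
      using eX kpos by (intro divide_right_mono) auto
    also have "\<dots> = 64 * (r + 1) * s * s / k" using kpos by (simp add: power2_eq_square field_simps)
    finally show ?thesis .
  qed
  have u1: "P.prob (\<Union>j<s. B1 j) \<le> s * (sqrt 2 * exp (- (25 * ln (real n)) / 4))"
  proof -
    have "P.prob (\<Union>j<s. B1 j) \<le> (\<Sum>j<s. P.prob (B1 j))"
      by (rule P.finite_measure_subadditive_finite) auto
    also have "\<dots> \<le> (\<Sum>j<s. sqrt 2 * exp (- (25 * ln (real n)) / 4))"
      using p1 by (intro sum_mono) auto
    finally show ?thesis by simp
  qed
  have u2: "P.prob (\<Union>j<s. \<Union>t\<in>?T. B2 j t) \<le> s * (r + 1) * (32 / (9 * k))"
  proof -
    have "P.prob (\<Union>j<s. \<Union>t\<in>?T. B2 j t) \<le> (\<Sum>j<s. P.prob (\<Union>t\<in>?T. B2 j t))"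
      by (rule P.finite_measure_subadditive_finite) auto
    also have "\<dots> \<le> (\<Sum>j<s. \<Sum>t\<in>?T. P.prob (B2 j t))"
      by (intro sum_mono P.finite_measure_subadditive_finite) auto
    also have "\<dots> \<le> (\<Sum>j<s. \<Sum>t\<in>?T. 32 / (9 * k))"
      using p2 by (intro sum_mono) auto
    finally show ?thesis by (simp add: algebra_simps)
  qed
  have "P.prob ((\<Union>j<s. B1 j) \<union> (\<Union>j<s. \<Union>t\<in>?T. B2 j t) \<union> B3) \<le>
        P.prob ((\<Union>j<s. B1 j) \<union> (\<Union>j<s. \<Union>t\<in>?T. B2 j t)) + P.prob B3"
    by (rule measure_Un_le) auto
  also have "\<dots> \<le> P.prob (\<Union>j<s. B1 j) + P.prob (\<Union>j<s. \<Union>t\<in>?T. B2 j t) + P.prob B3"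
    using measure_Un_le[where M="GMX s n" and A="\<Union>j<s. B1 j" and B="\<Union>j<s. \<Union>t\<in>?T. B2 j t"] by auto
  finally have bad: "P.prob ((\<Union>j<s. B1 j) \<union> (\<Union>j<s. \<Union>t\<in>?T. B2 j t) \<union> B3) \<le>
       s * (sqrt 2 * exp (- (25 * ln (real n)) / 4)) + s * (r + 1) * (32 / (9 * k)) + 64 * (r + 1) * s * s / k"
    using u1 u2 p3 by linarith
  have "P.prob N = 1 - P.prob ((\<Union>j<s. B1 j) \<union> (\<Union>j<s. \<Union>t\<in>?T. B2 j t) \<union> B3)"
    unfolding N_def by (subst P.prob_compl) auto
  with bad have "P.prob N \<ge> 1 - (s * (sqrt 2 * exp (- (25 * ln (real n)) / 4))
                                + s * (r + 1) * (32 / (9 * k)) + 64 * (r + 1) * s * s / k)" by linarith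
  with sN sub show ?thesis by blast
qed


lemma root_meas:
  fixes f :: "'a \<Rightarrow> real \<Rightarrow> real"
  assumes meas: "\<And>\<sigma>. (\<lambda>\<omega>. f \<omega> \<sigma>) \<in> borel_measurable M"
    and cont: "\<And>\<omega>. continuous_on {a..b} (f \<omega>)"
  shows "{\<omega> \<in> space M. \<exists>\<sigma>\<in>{a..b}. f \<omega> \<sigma> = 0} \<in> sets M"
proof -
  define D where "D = (\<rat> \<inter> {a..b}) \<union> {a, b} \<inter> {a..b}"
  have cD: "countable D" unfolding D_def using countable_rat by auto
  have Dab: "D \<subseteq> {a..b}" unfolding D_def by auto
  have eq: "{\<omega> \<in> space M. \<exists>\<sigma>\<in>{a..b}. f \<omega> \<sigma> = 0} =
     (\<Inter>N\<in>UNIV. \<Union>q\<in>D. {\<omega> \<in> space M. \<bar>f \<omega> q\<bar> < 1 / Suc N})"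
  proof (intro equalityI subsetI)
    fix \<omega> assume "\<omega> \<in> {\<omega> \<in> space M. \<exists>\<sigma>\<in>{a..b}. f \<omega> \<sigma> = 0}"
    then obtain \<sigma>0 where om: "\<omega> \<in> space M" and s0: "\<sigma>0 \<in> {a..b}" and z: "f \<omega> \<sigma>0 = 0" by auto
    show "\<omega> \<in> (\<Inter>N\<in>UNIV. \<Union>q\<in>D. {\<omega> \<in> space M. \<bar>f \<omega> q\<bar> < 1 / Suc N})"
    proof (intro INT_I)
      fix N :: nat
      have e: "(1::real) / Suc N > 0" by simp
      from cont[of \<omega>] s0 e obtain \<delta> where d: "\<delta> > 0"
        and dd: "\<And>x. x \<in> {a..b} \<Longrightarrow> dist x \<sigma>0 < \<delta> \<Longrightarrow> dist (f \<omega> x) (f \<omega> \<sigma>0) < 1 / Suc N"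
        unfolding continuous_on_iff by metis
      obtain q where q: "q \<in> D" "dist q \<sigma>0 < \<delta>"
      proof (cases "\<sigma>0 = b")
        case True
        then show ?thesis using that[of b] d s0 unfolding D_def by auto
      next
        case False
        then have "\<sigma>0 < min b (\<sigma>0 + \<delta>)" using s0 d by auto
        from Rats_dense_in_real[OF this] obtain q' where "q' \<in> \<rat>" "\<sigma>0 < q'" "q' < min b (\<sigma>0 + \<delta>)" by blast
        then show ?thesis using that[of q'] s0 unfolding D_def dist_real_def by auto
      qed
      have "dist (f \<omega> q) (f \<omega> \<sigma>0) < 1 / Suc N" using dd q Dab by auto
      then have "\<omega> \<in> {\<omega> \<in> space M. \<bar>f \<omega> q\<bar> < 1 / Suc N}" using z om by (simp add: dist_real_def)
      then show "\<omega> \<in> (\<Union>q\<in>D. {\<omega> \<in> space M. \<bar>f \<omega> q\<bar> < 1 / Suc N})" using q(1) by blast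
    qed
  next
    fix \<omega> assume "\<omega> \<in> (\<Inter>N\<in>UNIV. \<Union>q\<in>D. {\<omega> \<in> space M. \<bar>f \<omega> q\<bar> < 1 / Suc N})"
    then have om: "\<omega> \<in> space M" and ex: "\<forall>N. \<exists>q. q \<in> D \<and> \<bar>f \<omega> q\<bar> < 1 / Suc N" by auto
    from ex obtain g where g: "\<And>N. g N \<in> D" "\<And>N. \<bar>f \<omega> (g N)\<bar> < 1 / Suc N" by metis
    have "seq_compact {a..b}" by (rule compact_imp_seq_compact) (rule compact_Icc)
    then obtain l r where l: "l \<in> {a..b}" and r: "strict_mono r" and lim: "(g \<circ> r) \<longlonglongrightarrow> l"
      unfolding seq_compact_def using g(1) Dab by blast
    have t1: "(\<lambda>N. f \<omega> ((g \<circ> r) N)) \<longlonglongrightarrow> f \<omega> l"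
    proof (rule continuous_on_tendsto_compose[OF cont lim l])
      have "(g \<circ> r) N \<in> {a..b}" for N using g(1)[of "r N"] Dab by auto
      then show "\<forall>\<^sub>F N in sequentially. (g \<circ> r) N \<in> {a..b}" by (intro always_eventually) auto
    qed
    have t2: "(\<lambda>N. f \<omega> ((g \<circ> r) N)) \<longlonglongrightarrow> 0"
    proof (rule Lim_null_comparison)
      show "\<forall>\<^sub>F N in sequentially. norm (f \<omega> ((g \<circ> r) N)) \<le> inverse (real (Suc N))"
      proof (intro always_eventually allI)
        fix N
        have "\<bar>f \<omega> (g (r N))\<bar> < 1 / Suc (r N)" by (rule g(2))
        also have "\<dots> \<le> 1 / Suc N" using seq_suble[OF r, of N] by (intro divide_left_mono) auto
        finally show "norm (f \<omega> ((g \<circ> r) N)) \<le> inverse (real (Suc N))" by (simp add: divide_inverse)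
      qed
      show "(\<lambda>N. inverse (real (Suc N))) \<longlonglongrightarrow> 0" by (rule LIMSEQ_inverse_real_of_nat)
    qed
    have "f \<omega> l = 0" using LIMSEQ_unique[OF t1 t2] .
    then show "\<omega> \<in> {\<omega> \<in> space M. \<exists>\<sigma>\<in>{a..b}. f \<omega> \<sigma> = 0}" using om l by auto
  qed
  have "(\<Inter>N\<in>UNIV. \<Union>q\<in>D. {\<omega> \<in> space M. \<bar>f \<omega> q\<bar> < 1 / Suc N}) \<in> sets M"
  proof (rule sets.countable_INT)
    show "(\<lambda>N. \<Union>q\<in>D. {\<omega> \<in> space M. \<bar>f \<omega> q\<bar> < 1 / Suc N}) ` UNIV \<subseteq> sets M"
    proof safe
      fix N :: nat
      show "(\<Union>q\<in>D. {\<omega> \<in> space M. \<bar>f \<omega> q\<bar> < 1 / Suc N}) \<in> sets M"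
        by (rule sets.countable_UN''[OF cD]) (use meas in measurable)
    qed
  qed simp
  then show ?thesis unfolding eq .
qed


definition detf :: "nat \<Rightarrow> (nat \<times> nat \<Rightarrow> real) \<Rightarrow> real" where
  "detf q F = (\<Sum>p\<in>{p. p permutes {0..<q}}. signof p * (\<Prod>i\<in>{0..<q}. F (i, p i)))"

lemma det_mat_detf: "det (Matrix.mat q q F) = detf q F"
  unfolding det_def detf_def
  by (auto intro!: sum.cong prod.cong simp: permutes_in_image)

lemma eig_det:
  fixes Q :: "nat \<times> nat \<Rightarrow> real"
  shows "(\<exists>x::nat\<Rightarrow>real. (\<exists>j<q. x j \<noteq> 0) \<and> (\<forall>j<q. (\<Sum>l<q. Q(j,l) * x l) = lm * x j)) \<longleftrightarrow>
         detf q (\<lambda>(j,l). Q(j,l) - (if j = l then lm else 0)) = 0"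
proof -
  let ?A = "Matrix.mat q q (\<lambda>(j,l). Q(j,l) - (if j = l then lm else 0))"
  have A: "?A \<in> carrier_mat q q" by simp
  have mv: "(?A *\<^sub>v v) $ j = (\<Sum>l<q. Q(j,l) * v $ l) - lm * v $ j" if "j < q" "dim_vec v = q" for v j
  proof -
    have "(?A *\<^sub>v v) $ j = (\<Sum>l\<in>{0..<q}. (Q(j,l) - (if j = l then lm else 0)) * v $ l)"
      using that by (simp add: scalar_prod_def)
    also have "\<dots> = (\<Sum>l<q. Q(j,l) * v $ l - (if j = l then lm * v $ l else 0))"
      by (intro sum.cong) (auto simp: algebra_simps)
    also have "\<dots> = (\<Sum>l<q. Q(j,l) * v $ l) - lm * v $ j"
      using that by (simp add: sum_subtractf)
    finally show ?thesis .
  qed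
  have "(\<exists>x::nat\<Rightarrow>real. (\<exists>j<q. x j \<noteq> 0) \<and> (\<forall>j<q. (\<Sum>l<q. Q(j,l) * x l) = lm * x j)) \<longleftrightarrow>
        (\<exists>v. v \<in> carrier_vec q \<and> v \<noteq> 0\<^sub>v q \<and> ?A *\<^sub>v v = 0\<^sub>v q)"
  proof
    assume "\<exists>x::nat\<Rightarrow>real. (\<exists>j<q. x j \<noteq> 0) \<and> (\<forall>j<q. (\<Sum>l<q. Q(j,l) * x l) = lm * x j)"
    then obtain x where x1: "\<exists>j<q. x j \<noteq> 0" and x2: "\<forall>j<q. (\<Sum>l<q. Q(j,l) * x l) = lm * x j" by blast
    let ?v = "vec q x"
    have "?v \<noteq> 0\<^sub>v q"
    proof
      assume "?v = 0\<^sub>v q"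
      then have "\<forall>j<q. x j = 0" by (metis index_vec index_zero_vec(1))
      then show False using x1 by auto
    qed
    moreover have "?A *\<^sub>v ?v = 0\<^sub>v q"
    proof (rule eq_vecI)
      fix j assume "j < dim_vec (0\<^sub>v q :: real vec)"
      then have j: "j < q" by simp
      have "(\<Sum>l<q. Q(j,l) * ?v $ l) = (\<Sum>l<q. Q(j,l) * x l)" by (intro sum.cong) auto
      then show "(?A *\<^sub>v ?v) $ j = 0\<^sub>v q $ j" using mv[OF j] x2 j by simp
    qed simp
    moreover have "?v \<in> carrier_vec q" by simp
    ultimately show "\<exists>v. v \<in> carrier_vec q \<and> v \<noteq> 0\<^sub>v q \<and> ?A *\<^sub>v v = 0\<^sub>v q" by blast
  next
    assume "\<exists>v. v \<in> carrier_vec q \<and> v \<noteq> 0\<^sub>v q \<and> ?A *\<^sub>v v = 0\<^sub>v q"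
    then obtain v where v: "v \<in> carrier_vec q" "v \<noteq> 0\<^sub>v q" "?A *\<^sub>v v = 0\<^sub>v q" by blast
    have dv: "dim_vec v = q" using v(1) by simp
    have "\<exists>j<q. v $ j \<noteq> 0"
    proof (rule ccontr)
      assume "\<not> (\<exists>j<q. v $ j \<noteq> 0)"
      then have "v = 0\<^sub>v q" using dv by (intro eq_vecI) auto
      then show False using v(2) by simp
    qed
    moreover have "\<forall>j<q. (\<Sum>l<q. Q(j,l) * v $ l) = lm * v $ j"
    proof (intro allI impI)
      fix j assume j: "j < q"
      have "(?A *\<^sub>v v) $ j = 0" using v(3) j by simp
      then show "(\<Sum>l<q. Q(j,l) * v $ l) = lm * v $ j" using mv[OF j dv] by simp
    qed
    ultimately show "\<exists>x::nat\<Rightarrow>real. (\<exists>j<q. x j \<noteq> 0) \<and> (\<forall>j<q. (\<Sum>l<q. Q(j,l) * x l) = lm * x j)"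
      by blast
  qed
  also have "\<dots> \<longleftrightarrow> det ?A = 0" using det_0_iff_vec_prod_zero[OF A] by simp
  finally show ?thesis unfolding det_mat_detf .
qed


lemma comp_meas:
  assumes "\<And>i. sets (K i) = sets borel"
  shows "(\<lambda>U. U x) \<in> borel_measurable (PiM I K)"
proof (cases "x \<in> I")
  case True
  have "(\<lambda>U. U x) \<in> measurable (PiM I K) (K x)" by (rule measurable_component_singleton[OF True])
  moreover have "measurable (PiM I K) (K x) = borel_measurable (PiM I K)"
    by (rule measurable_cong_sets) (simp_all add: assms)
  ultimately show ?thesis by simp
next
  case False
  have "\<forall>U\<in>space (PiM I K). U x = undefined"
    using False by (auto simp: space_PiM PiE_def extensional_def)
  then show ?thesis by (subst measurable_cong[where g="\<lambda>_. undefined"]) auto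
qed

definition Dsv :: "nat \<Rightarrow> nat \<Rightarrow> rmat \<Rightarrow> real \<Rightarrow> real" where
  "Dsv p q V \<sigma> = detf q (\<lambda>(j,l). (\<Sum>i<p. V(i,j) * V(i,l)) - (if j = l then 1 else 0) * \<sigma>\<^sup>2)"

lemma sv_det: "singular_value p q V \<sigma> \<longleftrightarrow> \<sigma> \<ge> 0 \<and> Dsv p q V \<sigma> = 0"
proof -
  have e: "(\<lambda>(j,l). (\<Sum>i<p. V(i,j) * V(i,l)) - (if j = l then 1 else 0) * \<sigma>\<^sup>2) =
           (\<lambda>(j,l). (\<lambda>(j,l). \<Sum>i<p. V(i,j) * V(i,l)) (j,l) - (if j = l then \<sigma>\<^sup>2 else 0))"
    by auto
  show ?thesis
    unfolding singular_value_def Dsv_def e eig_det[symmetric] by auto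
qed

lemma sv_bad_iff:
  "(\<exists>\<sigma>. singular_value p q V \<sigma> \<and> \<not> (1/4 \<le> \<sigma> \<and> \<sigma> \<le> 4)) \<longleftrightarrow>
   (\<exists>m::nat. (\<exists>\<sigma>\<in>{0..1/4 - 1/(real m + 5)}. Dsv p q V \<sigma> = 0) \<or>
             (\<exists>\<sigma>\<in>{4 + 1/(real m + 1)..real m + 5}. Dsv p q V \<sigma> = 0))"
proof
  assume "\<exists>\<sigma>. singular_value p q V \<sigma> \<and> \<not> (1/4 \<le> \<sigma> \<and> \<sigma> \<le> 4)"
  then obtain \<sigma> where sv: "singular_value p q V \<sigma>" and out0: "\<not> (1/4 \<le> \<sigma> \<and> \<sigma> \<le> 4)"
    by blast
  have s0: "\<sigma> \<ge> 0" and D: "Dsv p q V \<sigma> = 0" using sv unfolding sv_det by auto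
  have out: "\<sigma> < 1/4 \<or> \<sigma> > 4" using out0 by auto
  from out show "\<exists>m::nat. (\<exists>\<sigma>\<in>{0..1/4 - 1/(real m + 5)}. Dsv p q V \<sigma> = 0) \<or>
             (\<exists>\<sigma>\<in>{4 + 1/(real m + 1)..real m + 5}. Dsv p q V \<sigma> = 0)"
  proof
    assume lt: "\<sigma> < 1/4"
    obtain m :: nat where m: "inverse (real (Suc m)) < 1/4 - \<sigma>"
      using reals_Archimedean[of "1/4 - \<sigma>"] lt by auto
    have "1/(real m + 5) \<le> inverse (real (Suc m))" by (simp add: inverse_eq_divide frac_le)
    then have "\<sigma> \<in> {0..1/4 - 1/(real m + 5)}" using m s0 by auto
    then show ?thesis using D by blast
  next
    assume gt: "\<sigma> > 4"
    obtain m1 :: nat where m1: "inverse (real (Suc m1)) < \<sigma> - 4"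
      using reals_Archimedean[of "\<sigma> - 4"] gt by auto
    obtain m2 :: nat where m2: "\<sigma> < real m2" using reals_Archimedean2 by blast
    define m where "m = max m1 m2"
    have "1/(real m + 1) \<le> inverse (real (Suc m1))"
      unfolding m_def by (simp add: inverse_eq_divide frac_le)
    moreover have "real m2 \<le> real m" unfolding m_def by simp
    ultimately have "\<sigma> \<in> {4 + 1/(real m + 1)..real m + 5}" using m1 m2 by auto
    then show ?thesis using D by blast
  qed
next
  assume "\<exists>m::nat. (\<exists>\<sigma>\<in>{0..1/4 - 1/(real m + 5)}. Dsv p q V \<sigma> = 0) \<or>
             (\<exists>\<sigma>\<in>{4 + 1/(real m + 1)..real m + 5}. Dsv p q V \<sigma> = 0)"
  then obtain m :: nat and \<sigma> where
    c: "(\<sigma>\<in>{0..1/4 - 1/(real m + 5)} \<or> \<sigma>\<in>{4 + 1/(real m + 1)..real m + 5}) \<and> Dsv p q V \<sigma> = 0" by blast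
  have p1: "1/(real m + 5) > 0" and p2: "1/(real m + 1) > 0" by auto
  from c have ci: "(0 \<le> \<sigma> \<and> \<sigma> \<le> 1/4 - 1/(real m + 5)) \<or> (4 + 1/(real m + 1) \<le> \<sigma> \<and> \<sigma> \<le> real m + 5)"
    by auto
  have "\<sigma> \<ge> 0 \<and> \<not> (1/4 \<le> \<sigma> \<and> \<sigma> \<le> 4)" using ci p1 p2 by (elim disjE conjE; linarith)
  with c show "\<exists>\<sigma>. singular_value p q V \<sigma> \<and> \<not> (1/4 \<le> \<sigma> \<and> \<sigma> \<le> 4)" unfolding sv_det by blast
qed

lemma Dsv_cont: "continuous_on S (Dsv p q V)"
  unfolding Dsv_def detf_def prod.case by (intro continuous_intros)


lemma good_meas:
  fixes \<mu> :: "rmat measure"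
  assumes s\<mu>: "sets \<mu> = sets (mat_space n)"
  shows "{\<omega> \<in> space (\<mu> \<Otimes>\<^sub>M gauss_meas s n). good_event \<epsilon> n r s k (fst \<omega>) (snd \<omega>)}
           \<in> sets (\<mu> \<Otimes>\<^sub>M gauss_meas s n)"
proof -
  let ?PM = "\<mu> \<Otimes>\<^sub>M gauss_meas s n"
  have u: "(\<lambda>U. U x) \<in> borel_measurable \<mu>" for x
  proof -
    have "(\<lambda>U. U x) \<in> borel_measurable (mat_space n)"
      unfolding mat_space_def by (rule comp_meas) simp
    moreover have "(borel_measurable \<mu> :: (rmat \<Rightarrow> real) set) = borel_measurable (mat_space n)"
      by (rule measurable_cong_sets) (simp_all add: s\<mu>)
    ultimately show ?thesis by simp
  qed
  have g: "(\<lambda>G. G x) \<in> borel_measurable (gauss_meas s n)" for x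
    unfolding gauss_meas_def by (rule comp_meas) simp
  have cU[measurable]: "(\<lambda>\<omega>. fst \<omega> x) \<in> borel_measurable ?PM" for x
    by (rule measurable_compose[OF measurable_fst u])
  have cG[measurable]: "(\<lambda>\<omega>. snd \<omega> x) \<in> borel_measurable ?PM" for x
    by (rule measurable_compose[OF measurable_snd g])
  define R1 where "R1 = (\<lambda>t (m::nat). {\<omega> \<in> space ?PM. \<exists>\<sigma>\<in>{0..1/4 - 1/(real m + 5)}.
                         Dsv n s (Vmat \<epsilon> r k n s (fst \<omega>) (snd \<omega>) t) \<sigma> = 0})"
  define R2 where "R2 = (\<lambda>t (m::nat). {\<omega> \<in> space ?PM. \<exists>\<sigma>\<in>{4 + 1/(real m + 1)..real m + 5}.
                         Dsv n s (Vmat \<epsilon> r k n s (fst \<omega>) (snd \<omega>) t) \<sigma> = 0})"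
  have Dm: "(\<lambda>\<omega>. Dsv n s (Vmat \<epsilon> r k n s (fst \<omega>) (snd \<omega>) t) \<sigma>) \<in> borel_measurable ?PM" for t \<sigma>
    unfolding Dsv_def detf_def Vmat_def Pg_def acoef_def gdotu_def restrict_apply prod.case by measurable
  have sR1: "R1 t m \<in> sets ?PM" for t m
    unfolding R1_def by (rule root_meas[OF Dm Dsv_cont])
  have sR2: "R2 t m \<in> sets ?PM" for t m
    unfolding R2_def by (rule root_meas[OF Dm Dsv_cont])
  define C12 where "C12 = {\<omega> \<in> space ?PM. (\<forall>j<s. \<bar>gdotu n (fst \<omega>) (snd \<omega>) j 0\<bar> \<le> 5 * sqrt (ln (real n))) \<and>
     (\<forall>j<s. \<forall>t\<in>{2..r+2}. 0.5 * sqrt (real k) \<le> acoef \<epsilon> r k n (fst \<omega>) (snd \<omega>) t j \<and>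
                          acoef \<epsilon> r k n (fst \<omega>) (snd \<omega>) t j \<le> 2 * sqrt (real k))}"
  have sC12: "C12 \<in> sets ?PM"
    unfolding C12_def acoef_def Pg_def gdotu_def by measurable
  have eq: "{\<omega> \<in> space ?PM. good_event \<epsilon> n r s k (fst \<omega>) (snd \<omega>)} =
     C12 \<inter> (\<Inter>t\<in>{2..r+2}. space ?PM - (\<Union>m. R1 t m \<union> R2 t m))"
  proof -
    have sv: "(\<forall>\<sigma>. singular_value n s (Vmat \<epsilon> r k n s U G t) \<sigma> \<longrightarrow> 1/4 \<le> \<sigma> \<and> \<sigma> \<le> 4) \<longleftrightarrow>
       \<not> (\<exists>m::nat. (\<exists>\<sigma>\<in>{0..1/4 - 1/(real m + 5)}. Dsv n s (Vmat \<epsilon> r k n s U G t) \<sigma> = 0) \<or>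
             (\<exists>\<sigma>\<in>{4 + 1/(real m + 1)..real m + 5}. Dsv n s (Vmat \<epsilon> r k n s U G t) \<sigma> = 0))" for U G t
      unfolding sv_bad_iff[symmetric] by blast
    show ?thesis
      unfolding good_event_def C12_def R1_def R2_def sv by auto
  qed
  have "(\<Inter>t\<in>{2..r+2}. space ?PM - (\<Union>m. R1 t m \<union> R2 t m)) \<in> sets ?PM"
    using sR1 sR2 by (intro sets.countable_INT') auto
  then show ?thesis unfolding eq using sC12 by auto
qed


lemma lam_t: "t \<noteq> 1 \<Longrightarrow> lam \<epsilon> r t = cos (real (t - 2) / real r * pi)"
  unfolding lam_def by simp

lemma lam_inj:
  assumes r: "r \<ge> 1" and t: "2 \<le> t" "t \<le> r + 2" and t': "2 \<le> t'" "t' \<le> r + 2"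
    and eq: "lam \<epsilon> r t = lam \<epsilon> r t'"
  shows "t = t'"
proof -
  have rp: "real r > 0" using r by simp
  have b: "0 \<le> real (u - 2) / real r * pi \<and> real (u - 2) / real r * pi \<le> pi" if "2 \<le> u" "u \<le> r + 2" for u
  proof -
    have "real (u - 2) \<le> real r" using that by simp
    then have h: "real (u - 2) / real r \<le> 1" using rp by simp
    have h0: "0 \<le> real (u - 2) / real r" using rp by simp
    have "real (u - 2) / real r * pi \<le> 1 * pi" using h by (intro mult_right_mono) auto
    then show ?thesis using h0 by simp
  qed
  have "t \<noteq> 1" "t' \<noteq> 1" using t t' by auto
  then have "cos (real (t - 2) / real r * pi) = cos (real (t' - 2) / real r * pi)"
    using eq lam_t by metis
  then have "real (t - 2) / real r * pi = real (t' - 2) / real r * pi"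
    using cos_inj_pi b[OF t] b[OF t'] by blast
  then have "real (t - 2) = real (t' - 2)" using rp by (simp add: field_simps)
  then show ?thesis using t t' by simp
qed

lemma Et_card:
  assumes r: "r \<ge> 1" and k: "k > 0" and nk: "n - 1 = k * (r + 1)" and n: "n \<ge> 1" and e: "\<epsilon> > 0"
    and t: "2 \<le> t" "t \<le> r + 2"
  shows "card {i. i < n \<and> Ddiag \<epsilon> r k i = lam \<epsilon> r t} = k"
proof -
  have ceq: "\<lceil>real i / real k\<rceil> = int c \<longleftrightarrow> (c - 1) * k < i \<and> i \<le> c * k" if "c \<ge> 1" for i c
  proof -
    have kp: "real k > 0" using k by simp
    have "\<lceil>real i / real k\<rceil> = int c \<longleftrightarrow> real c - 1 < real i / real k \<and> real i / real k \<le> real c"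
      by (simp add: ceiling_eq_iff)
    also have "\<dots> \<longleftrightarrow> (real c - 1) * real k < real i \<and> real i \<le> real c * real k"
      using kp by (simp add: field_simps)
    also have "\<dots> \<longleftrightarrow> (c - 1) * k < i \<and> i \<le> c * k"
    proof -
      have "(real c - 1) * real k = real ((c - 1) * k)" using that by (simp add: of_nat_diff)
      moreover have "real c * real k = real (c * k)" by simp
      ultimately show ?thesis by (simp only: of_nat_less_iff of_nat_le_iff)
    qed
    finally show ?thesis .
  qed
  have lt1: "lam \<epsilon> r t \<noteq> lam \<epsilon> r 1"
  proof -
    have "lam \<epsilon> r t \<le> 1" using t by (simp add: lam_def)
    moreover have "lam \<epsilon> r 1 = 1 + 2 * \<epsilon>" by (simp add: lam_def)
    ultimately show ?thesis using e by auto
  qed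
  have "{i. i < n \<and> Ddiag \<epsilon> r k i = lam \<epsilon> r t} = {(t - 2) * k <.. (t - 1) * k}"
  proof (intro equalityI subsetI)
    fix i assume "i \<in> {i. i < n \<and> Ddiag \<epsilon> r k i = lam \<epsilon> r t}"
    then have i: "i < n" and D: "Ddiag \<epsilon> r k i = lam \<epsilon> r t" by auto
    have i0: "i \<noteq> 0"
    proof
      assume "i = 0"
      then have "Ddiag \<epsilon> r k i = lam \<epsilon> r 1" unfolding Ddiag_def by simp
      with D lt1 show False by simp
    qed
    define c where "c = nat \<lceil>real i / real k\<rceil>"
    have cpos: "\<lceil>real i / real k\<rceil> \<ge> 1" using i0 k by (simp add: le_ceiling_iff)
    have ci: "\<lceil>real i / real k\<rceil> = int c" using cpos unfolding c_def by simp
    have ci2: "c \<ge> 1" using nat_mono[OF cpos] unfolding c_def by simp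
    note ci = ci ci2
    have "i \<le> k * (r + 1)" using i nk by simp
    then have "real i \<le> real k * real (r + 1)" by (metis of_nat_le_iff of_nat_mult)
    then have "real i / real k \<le> real (r + 1)" using k by (simp add: field_simps)
    then have "c \<le> r + 1" unfolding c_def by (simp add: ceiling_le_iff nat_le_iff)
    moreover have "lam \<epsilon> r (1 + c) = lam \<epsilon> r t" using D i0 unfolding Ddiag_def c_def by simp
    ultimately have "1 + c = t" using lam_inj[OF r _ _ t] ci(2) by simp
    then have "\<lceil>real i / real k\<rceil> = int (t - 1)" using ci by simp
    then have "(t - 1 - 1) * k < i \<and> i \<le> (t - 1) * k" using ceq[of "t - 1" i] t by simp
    then show "i \<in> {(t - 2) * k <.. (t - 1) * k}" by (simp add: numeral_2_eq_2)
  next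
    fix i assume "i \<in> {(t - 2) * k <.. (t - 1) * k}"
    then have i1: "(t - 1 - 1) * k < i" and i2: "i \<le> (t - 1) * k" by (auto simp: numeral_2_eq_2)
    have "\<lceil>real i / real k\<rceil> = int (t - 1)" using ceq[of "t - 1" i] t i1 i2 by simp
    moreover have i0: "i \<noteq> 0" using i1 by auto
    moreover have "(t - 1) * k \<le> (r + 1) * k" using t by (intro mult_right_mono) auto
    then have "i < n" using i2 nk n by (simp add: algebra_simps)
    ultimately have "nat \<lceil>real i / real k\<rceil> = t - 1" "i \<noteq> 0" "i < n" by auto
    moreover have "1 + (t - 1) = t" using t by simp
    ultimately show "i \<in> {i. i < n \<and> Ddiag \<epsilon> r k i = lam \<epsilon> r t}"
      unfolding Ddiag_def by simp
  qed
  moreover have "card {(t - 2) * k <.. (t - 1) * k} = k"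
  proof -
    have "(t - 1) * k - (t - 2) * k = k" using t by (simp add: diff_mult_distrib[symmetric])
    then show ?thesis by simp
  qed
  ultimately show ?thesis by simp
qed


lemma final_bound:
  fixes c \<epsilon> :: real and n r s k :: nat
  assumes c0: "0 < c" and c1: "c \<le> 1/100000" and e0: "0 < \<epsilon>" and e1: "\<epsilon> < 1/2"
    and nC: "real n \<ge> 1 * \<epsilon> powr (-2.01)" and rdef: "real r = c * ln (real n) / sqrt \<epsilon>"
    and sr: "s = r" and nk: "real n - 1 = real k * (real r + 1)" and ks: "k \<ge> 100 * s"
  shows "n \<ge> 4" "r \<ge> 1" "k > 0" "n - 1 = k * (r + 1)"
    "1 - (s * (sqrt 2 * exp (- (25 * ln (real n)) / 4)) + s * (r + 1) * (32 / (9 * k))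
        + 64 * (r + 1) * s * s / k) \<ge> 0.9"
proof -
  have ie: "1/\<epsilon> > 2" using e0 e1 by (simp add: field_simps)
  have "\<epsilon> powr (-2.01) = (1/\<epsilon>) powr 2.01" using e0 by (simp add: powr_minus_divide powr_divide)
  also have "\<dots> \<ge> 2 powr 2.01" using ie by (intro powr_mono2) auto
  finally have "\<epsilon> powr (-2.01) \<ge> 2 powr 2.01" .
  moreover have "2 powr (2.01::real) \<ge> 2 powr (2::real)" by (intro powr_mono) auto
  moreover have "(2::real) powr (2::real) = 4" by simp
  ultimately have n4r: "real n \<ge> 4" using nC by linarith
  then show n4: "n \<ge> 4" by simp
  define L where "L = ln (real n)"
  have Lpos: "L > 0" unfolding L_def using n4r by simp
  have rpos: "real r > 0" unfolding rdef using c0 e0 Lpos L_def by simp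
  then show r1: "r \<ge> 1" by simp
  show kpos: "k > 0" using ks r1 sr by simp
  have "real n = real k * (real r + 1) + 1" using nk by linarith
  then have "real n = real (k * (r + 1) + 1)" by (simp add: algebra_simps)
  then have "n = k * (r + 1) + 1" by (simp only: of_nat_eq_iff)
  then show "n - 1 = k * (r + 1)" by simp
  define \<rho> where "\<rho> = real r"
  have \<rho>1: "\<rho> \<ge> 1" unfolding \<rho>_def using r1 by simp
  have ee: "1 / \<epsilon>\<^sup>2 \<le> real n powr (200/201)"
  proof -
    have "real n powr (200/201) \<ge> (\<epsilon> powr (-2.01)) powr (200/201)"
      using nC e0 by (intro powr_mono2) auto
    moreover have "(\<epsilon> powr (-2.01)) powr (200/201) = \<epsilon> powr (-2)"
      by (simp add: powr_powr)
    moreover have "\<epsilon> powr (-2) = 1 / \<epsilon>\<^sup>2"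
    proof -
      have "\<epsilon> powr (-2) = inverse (\<epsilon> powr 2)" by (rule powr_minus)
      also have "\<epsilon> powr 2 = \<epsilon>\<^sup>2" using e0 by (simp only: powr_numeral less_imp_le)
      finally show ?thesis by (simp add: inverse_eq_divide)
    qed
    ultimately show ?thesis by simp
  qed
  have LL: "L \<le> 804 * real n powr (1/804)"
  proof -
    have "ln (real n powr (1/804)) \<le> real n powr (1/804) - 1"
      using n4r by (intro ln_le_minus_one) simp
    moreover have "ln (real n powr (1/804)) = L / 804" unfolding L_def using n4r by (simp add: ln_powr)
    ultimately show ?thesis by simp
  qed
  have L4: "L^4 \<le> 804^4 * real n powr (1/201)"
  proof -
    have "L^4 \<le> (804 * real n powr (1/804))^4" using LL Lpos by (intro power_mono) auto
    also have "\<dots> = 804^4 * (real n powr (1/804))^4" by (simp add: power_mult_distrib)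
    also have "(real n powr (1/804))^4 = real n powr (1/201)"
    proof -
      have "(real n powr (1/804))^4 = real n powr (of_nat 4 * (1/804))"
        by (rule powr_power) (use n4r in simp)
      also have "(of_nat 4 * (1/804) :: real) = 1/201" by simp
      finally show ?thesis .
    qed
    finally show ?thesis .
  qed
  have r4: "\<rho>^4 = c^4 * L^4 * (1 / \<epsilon>\<^sup>2)"
  proof -
    have "\<rho>^4 = (c * L / sqrt \<epsilon>)^4" unfolding \<rho>_def rdef L_def ..
    also have "\<dots> = c^4 * L^4 / (sqrt \<epsilon>)^4" by (simp add: power_divide power_mult_distrib)
    also have "(sqrt \<epsilon>)^4 = \<epsilon>\<^sup>2"
    proof -
      have "(sqrt \<epsilon>)^4 = ((sqrt \<epsilon>)^2)^2" by (simp add: power4_eq_xxxx power2_eq_square mult.assoc)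
      then show ?thesis using e0 by simp
    qed
    finally show ?thesis by simp
  qed
  have rho4: "\<rho>^4 \<le> 1/10^8 * real n"
  proof -
    have "\<rho>^4 \<le> c^4 * (804^4 * real n powr (1/201)) * real n powr (200/201)"
      unfolding r4 using L4 ee c0 Lpos by (intro mult_mono) (auto intro: mult_nonneg_nonneg)
    also have "\<dots> = (804 * c)^4 * (real n powr (1/201) * real n powr (200/201))"
      by (simp add: power_mult_distrib)
    also have "real n powr (1/201) * real n powr (200/201) = real n"
      using n4r by (simp add: powr_add[symmetric])
    also have "(804 * c)^4 \<le> (804 / 100000)^4" using c0 c1 by (intro power_mono) auto
    then have "(804 * c)^4 * real n \<le> (804 / 100000)^4 * real n" using n4r by (intro mult_right_mono) auto
    also have "(804 / 100000::real)^4 \<le> 1/10^8" by (simp add: power4_eq_xxxx)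
    then have "(804 / 100000::real)^4 * real n \<le> 1/10^8 * real n" using n4r by (intro mult_right_mono) auto
    finally show ?thesis by simp
  qed
  have T1: "s * (sqrt 2 * exp (- (25 * ln (real n)) / 4)) \<le> 1/100"
  proof -
    have "exp (- (25 * L) / 4) \<le> exp (- (real 6 * L))" using Lpos by simp
    also have "exp (- (real 6 * L)) = inverse (real n ^ 6)"
      unfolding exp_minus exp_of_nat_mult L_def using n4r by simp
    finally have ex: "exp (- (25 * L) / 4) \<le> inverse (real n ^ 6)" .
    have sn: "real s \<le> real n" using nk sr kpos
    proof -
      have "real k \<ge> 1" using kpos by simp
      then have "real k * (real r + 1) \<ge> 1 * (real r + 1)" using rpos by (intro mult_right_mono) auto
      then have "real r + 1 \<le> real n - 1" unfolding nk by simp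
      then have "real r \<le> real n" by linarith
      then show ?thesis using sr by simp
    qed
    have "s * (sqrt 2 * exp (- (25 * L) / 4)) \<le> real n * (2 * inverse (real n ^ 6))"
    proof -
      have s2: "sqrt (2::real) \<le> 2" using real_sqrt_le_mono[of "2::real" 4] by simp
      show ?thesis using sn ex s2 by (intro mult_mono) auto
    qed
    also have "\<dots> = 2 / real n ^ 5" using n4r by (simp add: field_simps power_eq_if)
    also have "\<dots> \<le> 2 / 4 ^ 5" using n4r by (intro divide_left_mono power_mono) auto
    finally show ?thesis unfolding L_def by simp
  qed
  have T23: "s * (r + 1) * (32 / (9 * k)) + 64 * (r + 1) * s * s / k \<le> 1/100"
  proof -
    have kr: "real k = (real n - 1) / (\<rho> + 1)" using nk \<rho>1 unfolding \<rho>_def by (simp add: field_simps)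
    have n1: "real n - 1 > 0" using n4r by simp
    have kp: "real k > 0" using kpos by simp
    have e1: "s * (r + 1) * (32 / (9 * k)) + 64 * (r + 1) * s * s / k =
          \<rho> * (\<rho> + 1) * (32/9 + 64 * \<rho>) * (1 / real k)"
      unfolding sr \<rho>_def using kp by (simp add: field_simps)
    have e2: "1 / real k = (\<rho> + 1) / (real n - 1)"
    proof -
      have "real k * (real r + 1) > 0" using kp by (intro mult_pos_pos) auto
      then show ?thesis unfolding \<rho>_def nk using kp by (simp add: field_simps)
    qed
    have "s * (r + 1) * (32 / (9 * k)) + 64 * (r + 1) * s * s / k =
          \<rho> * (\<rho> + 1)^2 * (32/9 + 64 * \<rho>) / (real n - 1)"
      unfolding e1 e2 by (simp add: power2_eq_square)
    also have "\<rho> * (\<rho> + 1)^2 * (32/9 + 64 * \<rho>) \<le> \<rho> * (4 * \<rho>^2) * (68 * \<rho>)"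
    proof -
      have "(\<rho> + 1)^2 \<le> (2 * \<rho>)^2" using \<rho>1 by (intro power_mono) auto
      then have a: "(\<rho> + 1)^2 \<le> 4 * \<rho>^2" by (simp add: power_mult_distrib)
      have b: "32/9 + 64 * \<rho> \<le> 68 * \<rho>" using \<rho>1 by simp
      show ?thesis using a b \<rho>1 by (intro mult_mono) auto
    qed
    then have "\<rho> * (\<rho> + 1)^2 * (32/9 + 64 * \<rho>) / (real n - 1) \<le> \<rho> * (4 * \<rho>^2) * (68 * \<rho>) / (real n - 1)"
      using n1 by (intro divide_right_mono) auto
    also have "\<rho> * (4 * \<rho>^2) * (68 * \<rho>) = 272 * \<rho>^4" by (simp add: power2_eq_square power4_eq_xxxx)
    also have "272 * \<rho>^4 / (real n - 1) \<le> 272 * (1/10^8 * real n) / (real n - 1)"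
      using rho4 n1 by (intro divide_right_mono) auto
    also have "\<dots> \<le> 272 * (1/10^8 * (2 * (real n - 1))) / (real n - 1)"
      using n4r n1 by (intro divide_right_mono) auto
    also have "\<dots> = 544 / 10^8 * ((real n - 1) / (real n - 1))" by (simp add: field_simps)
    also have "\<dots> = 544 / 10^8" using n1 by simp
    also have "\<dots> \<le> 1/100" by simp
    finally show ?thesis .
  qed
  show "1 - (s * (sqrt 2 * exp (- (25 * ln (real n)) / 4)) + s * (r + 1) * (32 / (9 * k))
        + 64 * (r + 1) * s * s / k) \<ge> 0.9" using T1 T23 by linarith
qed

theorem lemma5p5:
  shows "\<exists>C>0. \<exists>c0>0. \<forall>(c::real) (\<epsilon>::real) (n::nat) (r::nat) (s::nat) (k::nat) (\<mu>::rmat measure).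
     0 < c \<and> c \<le> c0 \<and> 0 < \<epsilon> \<and> \<epsilon> < 1/2 \<and>
     real n \<ge> C * \<epsilon> powr (-2.01) \<and>
     real r = c * ln (real n) / sqrt \<epsilon> \<and> s = r \<and>
     real n - 1 = real k * (real r + 1) \<and> k \<ge> 100 * s \<and>
     haar_orthogonal n \<mu>
     \<longrightarrow> measure (\<mu> \<Otimes>\<^sub>M gauss_meas s n)
           {\<omega> \<in> space (\<mu> \<Otimes>\<^sub>M gauss_meas s n). good_event \<epsilon> n r s k (fst \<omega>) (snd \<omega>)} \<ge> 0.9"
proof -
  have key: "measure (\<mu> \<Otimes>\<^sub>M gauss_meas s n)
           {\<omega> \<in> space (\<mu> \<Otimes>\<^sub>M gauss_meas s n). good_event \<epsilon> n r s k (fst \<omega>) (snd \<omega>)} \<ge> 0.9"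
    if hyps: "0 < c \<and> c \<le> 1/100000 \<and> 0 < \<epsilon> \<and> \<epsilon> < 1/2 \<and>
     real n \<ge> 1 * \<epsilon> powr (-2.01) \<and>
     real r = c * ln (real n) / sqrt \<epsilon> \<and> s = r \<and>
     real n - 1 = real k * (real r + 1) \<and> k \<ge> 100 * s \<and>
     haar_orthogonal n \<mu>"
    for c \<epsilon> :: real and n r s k :: nat and \<mu> :: "rmat measure"
  proof -
    from hyps have c0: "0 < c" and c1: "c \<le> 1/100000" and e0: "0 < \<epsilon>" and e1: "\<epsilon> < 1/2"
      and nC: "real n \<ge> 1 * \<epsilon> powr (-2.01)" and rdef: "real r = c * ln (real n) / sqrt \<epsilon>"
      and sr: "s = r" and nk: "real n - 1 = real k * (real r + 1)" and ks: "k \<ge> 100 * s"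
      and haar: "haar_orthogonal n \<mu>" by auto
    note fb = final_bound[OF c0 c1 e0 e1 nC rdef sr nk ks]
    have n4: "n \<ge> 4" and r1: "r \<ge> 1" and kpos: "k > 0" and nkn: "n - 1 = k * (r + 1)"
      using fb by auto
    have bnd: "1 - (s * (sqrt 2 * exp (- (25 * ln (real n)) / 4)) + s * (r + 1) * (32 / (9 * k))
        + 64 * (r + 1) * s * s / k) \<ge> 0.9" using fb by auto
    from haar have s\<mu>: "sets \<mu> = sets (mat_space n)" and p\<mu>: "prob_space \<mu>"
      and ae: "AE U in \<mu>. Defs.orthogonal_mat n U" unfolding haar_orthogonal_def by auto
    interpret M: prob_space \<mu> by (rule p\<mu>)
    have GMeq: "gauss_meas s n = GMX s n" unfolding gauss_meas_def NN_def ..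
    interpret G: prob_space "gauss_meas s n" unfolding GMeq by (rule GMI_prob)
    interpret PM: prob_space "\<mu> \<Otimes>\<^sub>M gauss_meas s n"
      by (rule prob_space_pair) unfold_locales
    define Good where "Good = {\<omega> \<in> space (\<mu> \<Otimes>\<^sub>M gauss_meas s n). good_event \<epsilon> n r s k (fst \<omega>) (snd \<omega>)}"
    have sGood: "Good \<in> sets (\<mu> \<Otimes>\<^sub>M gauss_meas s n)" unfolding Good_def by (rule good_meas[OF s\<mu>])
    have card: "\<forall>t\<in>{2..r+2}. card (Et \<epsilon> r k n t) = k"
      using Et_card[OF r1 kpos nkn _ e0] n4 by auto
    have sec: "emeasure (gauss_meas s n) (Pair U -` Good) \<ge> ennreal 0.9"
      if U: "U \<in> space \<mu>" and o: "Defs.orthogonal_mat n U" for U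
    proof -
      have oc: "orthc n U" using o unfolding Defs.orthogonal_mat_def orthc_def .
      obtain N where sN: "N \<in> sets (GMX s n)"
        and subN: "N \<subseteq> {G \<in> space (GMX s n). good_event \<epsilon> n r s k U G}"
        and mN: "measure (GMX s n) N \<ge> 1 - (s * (sqrt 2 * exp (- (25 * ln (real n)) / 4))
                                + s * (r + 1) * (32 / (9 * k)) + 64 * (r + 1) * s * s / k)"
        using per_U[OF oc _ kpos card] n4 by auto
      have pre: "Pair U -` Good = {G \<in> space (gauss_meas s n). good_event \<epsilon> n r s k U G}"
        unfolding Good_def using U by (auto simp: space_pair_measure)
      have "ennreal 0.9 \<le> ennreal (measure (GMX s n) N)" using mN bnd by (intro ennreal_leI) linarith
      also have "\<dots> = emeasure (GMX s n) N"
        using G.emeasure_eq_measure[of N] unfolding GMeq by simp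
      also have "\<dots> \<le> emeasure (GMX s n) {G \<in> space (GMX s n). good_event \<epsilon> n r s k U G}"
      proof (rule emeasure_mono[OF subN])
        have "Pair U -` Good \<in> sets (gauss_meas s n)" by (rule sets_Pair1[OF sGood])
        then show "{G \<in> space (GMX s n). good_event \<epsilon> n r s k U G} \<in> sets (GMX s n)"
          unfolding pre GMeq .
      qed
      finally show ?thesis unfolding pre GMeq .
    qed
    have aeb: "AE U in \<mu>. ennreal 0.9 \<le> emeasure (gauss_meas s n) (Pair U -` Good)"
    proof (rule AE_mp[OF ae], rule AE_I2, rule impI)
      fix U assume "U \<in> space \<mu>" "Defs.orthogonal_mat n U"
      then show "ennreal 0.9 \<le> emeasure (gauss_meas s n) (Pair U -` Good)" by (rule sec)
    qed
    have "emeasure (\<mu> \<Otimes>\<^sub>M gauss_meas s n) Good = (\<integral>\<^sup>+U. emeasure (gauss_meas s n) (Pair U -` Good) \<partial>\<mu>)"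
      by (rule G.emeasure_pair_measure_alt[OF sGood])
    also have "\<dots> \<ge> (\<integral>\<^sup>+U. ennreal 0.9 \<partial>\<mu>)"
      by (rule nn_integral_mono_AE[OF aeb])
    moreover have "(\<integral>\<^sup>+U. ennreal 0.9 \<partial>\<mu>) = ennreal 0.9"
      by (simp add: M.emeasure_space_1)
    ultimately have "emeasure (\<mu> \<Otimes>\<^sub>M gauss_meas s n) Good \<ge> ennreal 0.9" by simp
    then have "ennreal (measure (\<mu> \<Otimes>\<^sub>M gauss_meas s n) Good) \<ge> ennreal 0.9"
      using PM.emeasure_eq_measure by simp
    then show ?thesis unfolding Good_def by (simp add: ennreal_le_iff)
  qed
  show ?thesis
    apply (rule exI[where x="1::real"])
    apply (rule conjI, simp)
    apply (rule exI[where x="1/100000::real"])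
    apply (rule conjI, simp)
    using key by blast
qed

end
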